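(* For every $n\in\mathbb{N}^+$ the set $\mathcal{F}_n=\{G\in\mathcal{C}(\mathbb{T}^{\mathbb{N}}): \pi_{[0,n-1]}(G) \text{ is a circle group and } \pi_{[n,\infty)}(G) \text{ is the trivial group}\}$ is a $\frac{1}{2^{n-1}}$-net in $\mathcal{C}(\mathbb{T}^{\mathbb{N}})$, i.e. for every $G\in\mathcal{C}(\mathbb{T}^{\mathbb{N}})$ there is $F\in\mathcal{F}_n$ with $d_H(G,F)\le \frac{1}{2^{n-1}}$.
   Context: Let $\mathbb{T}=\mathbb{R}/\mathbb{Z}$ with its usual metric $d_{\mathbb{T}}$ (diameter $1/2$), and $\mathbb{T}^{\mathbb{N}}$ with metric $d(x,y)=\sum_{n=0}^\infty 2^{-n}d_{\mathbb{T}}(x(n),y(n))$. $\mathcal{C}(\mathbb{T}^{\mathbb{N}})$ is the set of nonempty compact connected subgroups of $\mathbb{T}^{\mathbb{N}}$ with the Hausdorff metric $d_H$ induced by $d$. For $G\in\mathcal{C}(\mathbb{T}^{\mathbb{N}})$, $\pi_{[0,n-1]}(G)$ is the projection of $G$ onto the first $n$ coordinates (a subgroup of $\mathbb{T}^n$) and $\pi_{[n,\infty)}(G)$ is its projection onto the coordinates $n,n+1,\dots$. A circle group means a subgroup isomorphic as a topological group to $\mathbb{T}$. *)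

theory Defs
  imports "HOL-Analysis.Analysis"
begin

text \<open>The circle T = R/Z is represented by the representatives [0,1) with addition mod 1.\<close>

definition T_set :: "real set" where
  "T_set = {0..<1}"

definition T_add :: "real \<Rightarrow> real \<Rightarrow> real" where
  "T_add a b = frac (a + b)"

definition dT :: "real \<Rightarrow> real \<Rightarrow> real" where
  "dT a b = \<bar>(a - b) - of_int (round (a - b))\<bar>"

definition T_top :: "real topology" where
  "T_top = Metric_space.mtopology T_set dT"

definition TN :: "(nat \<Rightarrow> real) set" where
  "TN = {x. \<forall>n. x n \<in> T_set}"

definition TN_zero :: "nat \<Rightarrow> real" where
  "TN_zero = (\<lambda>n. 0)"

definition TN_add :: "(nat \<Rightarrow> real) \<Rightarrow> (nat \<Rightarrow> real) \<Rightarrow> (nat \<Rightarrow> real)" where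
  "TN_add x y = (\<lambda>n. T_add (x n) (y n))"

definition TN_neg :: "(nat \<Rightarrow> real) \<Rightarrow> (nat \<Rightarrow> real)" where
  "TN_neg x = (\<lambda>n. frac (- x n))"

definition dTN :: "(nat \<Rightarrow> real) \<Rightarrow> (nat \<Rightarrow> real) \<Rightarrow> real" where
  "dTN x y = (\<Sum>n. dT (x n) (y n) / 2 ^ n)"

definition TN_top :: "(nat \<Rightarrow> real) topology" where
  "TN_top = Metric_space.mtopology TN dTN"

definition is_subgroup_TN :: "(nat \<Rightarrow> real) set \<Rightarrow> bool" where
  "is_subgroup_TN G \<longleftrightarrow> G \<subseteq> TN \<and> TN_zero \<in> G \<and>
     (\<forall>x\<in>G. \<forall>y\<in>G. TN_add x y \<in> G) \<and> (\<forall>x\<in>G. TN_neg x \<in> G)"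

definition CTN :: "(nat \<Rightarrow> real) set set" where
  "CTN = {G. G \<noteq> {} \<and> is_subgroup_TN G \<and> compactin TN_top G \<and> connectedin TN_top G}"

definition dH :: "(nat \<Rightarrow> real) set \<Rightarrow> (nat \<Rightarrow> real) set \<Rightarrow> real" where
  "dH A B = max (SUP a\<in>A. INF b\<in>B. dTN a b) (SUP b\<in>B. INF a\<in>A. dTN a b)"

text \<open>Projection onto coordinates 0..n-1, with T^n identified with the closed subgroup
  of T^N of sequences vanishing from coordinate n on (a topological group isomorphism).\<close>
definition proj_init :: "nat \<Rightarrow> (nat \<Rightarrow> real) \<Rightarrow> (nat \<Rightarrow> real)" where
  "proj_init n x = (\<lambda>i. if i < n then x i else 0)"

definition proj_tail :: "nat \<Rightarrow> (nat \<Rightarrow> real) \<Rightarrow> (nat \<Rightarrow> real)" where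
  "proj_tail n x = (\<lambda>i. x (i + n))"

definition circle_group :: "(nat \<Rightarrow> real) set \<Rightarrow> bool" where
  "circle_group H \<longleftrightarrow> H \<subseteq> TN \<and> (\<exists>f. homeomorphic_map T_top (subtopology TN_top H) f \<and>
       (\<forall>a\<in>T_set. \<forall>b\<in>T_set. f (T_add a b) = TN_add (f a) (f b)))"

end

theory Submission
  imports Defs
begin

lemma round_min: "\<bar>(x::real) - of_int (round x)\<bar> \<le> \<bar>x - of_int m\<bar>"
  by (rule round_diff_minimal)

lemma dT_le: "dT a b \<le> \<bar>a - b - of_int m\<bar>"
  unfolding dT_def by (rule round_min)

lemma dT_nonneg [simp]: "0 \<le> dT a b"
  by (simp add: dT_def)

lemma dT_half: "dT a b \<le> 1/2"
  unfolding dT_def using of_int_round_abs_le[of "a-b"] by (simp add: abs_minus_commute)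

lemma dT_ex: "\<exists>m. dT a b = \<bar>a - b - of_int m\<bar>"
  unfolding dT_def by blast

lemma dT_commute: "dT a b = dT b a"
proof -
  have "dT a b \<le> dT b a" for a b
  proof -
    obtain m where "dT b a = \<bar>b - a - of_int m\<bar>" using dT_ex by blast
    moreover have "dT a b \<le> \<bar>a - b - of_int (-m)\<bar>" by (rule dT_le)
    ultimately show ?thesis by simp
  qed
  then show ?thesis by (meson order_antisym)
qed

lemma dT_triangle: "dT a c \<le> dT a b + dT b c"
proof -
  obtain m1 where m1: "dT a b = \<bar>a - b - of_int m1\<bar>" using dT_ex by blast
  obtain m2 where m2: "dT b c = \<bar>b - c - of_int m2\<bar>" using dT_ex by blast
  have "dT a c \<le> \<bar>a - c - of_int (m1 + m2)\<bar>" by (rule dT_le)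
  also have "\<dots> \<le> \<bar>a - b - of_int m1\<bar> + \<bar>b - c - of_int m2\<bar>" by simp
  finally show ?thesis using m1 m2 by simp
qed

lemma dT_zero: "a \<in> T_set \<Longrightarrow> b \<in> T_set \<Longrightarrow> dT a b = 0 \<longleftrightarrow> a = b"
proof
  assume ab: "a \<in> T_set" "b \<in> T_set" and d: "dT a b = 0"
  obtain m where m: "dT a b = \<bar>a - b - of_int m\<bar>" using dT_ex by blast
  then have "a - b = of_int m" using d by simp
  moreover have "\<bar>a - b\<bar> < 1" using ab by (auto simp: T_set_def)
  ultimately have "m = 0" by (metis of_int_abs of_int_less_1_iff zabs_less_one_iff)
  then show "a = b" using \<open>a - b = of_int m\<close> by simp
next
  assume "a = b" then show "dT a b = 0" by (simp add: dT_def)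
qed

lemma dT_same: "dT a a = 0" by (simp add: dT_def)

lemma dT_le_abs: "dT a b \<le> \<bar>a - b\<bar>"
  using dT_le[of a b 0] by simp

lemma dT_shift: "dT (a + of_int k) b = dT a b"
proof -
  have "dT (a + of_int k) b \<le> dT a b"
  proof -
    obtain m where "dT a b = \<bar>a - b - of_int m\<bar>" using dT_ex by blast
    moreover have "dT (a + of_int k) b \<le> \<bar>a + of_int k - b - of_int (m + k)\<bar>" by (rule dT_le)
    ultimately show ?thesis by simp
  qed
  moreover have "dT a b \<le> dT (a + of_int k) b"
  proof -
    obtain m where "dT (a + of_int k) b = \<bar>a + of_int k - b - of_int m\<bar>" using dT_ex by blast
    moreover have "dT a b \<le> \<bar>a - b - of_int (m - k)\<bar>" by (rule dT_le)
    ultimately show ?thesis by simp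
  qed
  ultimately show ?thesis by simp
qed

lemma dT_frac: "dT (frac x) (frac y) = dT x y"
proof -
  have fx: "frac x = x + of_int (- floor x)" and fy: "frac y = y + of_int (- floor y)"
    by (simp_all add: frac_def)
  have "dT (frac x) (frac y) = dT x (frac y)" by (simp only: fx dT_shift)
  also have "\<dots> = dT (frac y) x" by (rule dT_commute)
  also have "\<dots> = dT y x" by (simp only: fy dT_shift)
  finally show ?thesis by (simp add: dT_commute)
qed

lemma summable_dT: "summable (\<lambda>i. dT (x i) (y i) / 2 ^ i)"
proof (rule summable_comparison_test[where g = "\<lambda>i. (1/2) ^ i"])
  show "\<exists>N. \<forall>i\<ge>N. norm (dT (x i) (y i) / 2 ^ i) \<le> (1/2) ^ i"
  proof (intro exI allI impI)
    fix i :: nat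
    have "dT (x i) (y i) / 2 ^ i \<le> 1 / 2 ^ i"
      using dT_half[of "x i" "y i"] by (intro divide_right_mono) auto
    then show "norm (dT (x i) (y i) / 2 ^ i) \<le> (1/2) ^ i"
      by (simp add: power_one_over)
  qed
  show "summable (\<lambda>i. (1/2::real) ^ i)" by simp
qed

lemma dTN_nonneg: "0 \<le> dTN x y"
  unfolding dTN_def by (rule suminf_nonneg[OF summable_dT]) simp

lemma term_le_dTN: "dT (x i) (y i) / 2 ^ i \<le> dTN x y"
  unfolding dTN_def
  using sum_le_suminf[OF summable_dT, of "{i}" x y] by auto

interpretation TNm: Metric_space TN dTN
proof
  show "0 \<le> dTN x y" for x y by (rule dTN_nonneg)
  show "dTN x y = dTN y x" for x y unfolding dTN_def by (simp add: dT_commute)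
  show "dTN x y = 0 \<longleftrightarrow> x = y" if "x \<in> TN" "y \<in> TN" for x y
  proof
    assume "dTN x y = 0"
    then have "\<forall>i. dT (x i) (y i) / 2 ^ i = 0"
      unfolding dTN_def using suminf_eq_zero_iff[OF summable_dT] by auto
    then have "\<forall>i. x i = y i" using that by (auto simp: TN_def dT_zero)
    then show "x = y" by auto
  next
    assume "x = y" then show "dTN x y = 0" by (simp add: dTN_def dT_same)
  qed
  show "dTN x z \<le> dTN x y + dTN y z" for x y z
  proof -
    have "dTN x y + dTN y z = (\<Sum>i. dT (x i) (y i) / 2 ^ i + dT (y i) (z i) / 2 ^ i)"
      unfolding dTN_def by (rule suminf_add[OF summable_dT summable_dT])
    moreover have "dTN x z \<le> (\<Sum>i. dT (x i) (y i) / 2 ^ i + dT (y i) (z i) / 2 ^ i)"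
      unfolding dTN_def
      by (rule suminf_le[OF _ summable_dT summable_add[OF summable_dT summable_dT]])
         (simp add: add_divide_distrib[symmetric] divide_right_mono dT_triangle)
    ultimately show ?thesis by simp
  qed
qed

interpretation Tm: Metric_space T_set dT
proof
  show "0 \<le> dT x y" for x y by simp
  show "dT x y = dT y x" for x y by (rule dT_commute)
  show "dT x y = 0 \<longleftrightarrow> x = y" if "x \<in> T_set" "y \<in> T_set" for x y using dT_zero that by blast
  show "dT x z \<le> dT x y + dT y z" for x y z by (rule dT_triangle)
qed

lemma TN_top_eq: "TN_top = TNm.mtopology" by (simp add: TN_top_def)
lemma T_top_eq: "T_top = Tm.mtopology" by (simp add: T_top_def)


definition qn :: "nat \<Rightarrow> (nat \<Rightarrow> real) \<Rightarrow> (nat \<Rightarrow> real)" where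
  "qn n x = (\<lambda>i. if i < n then frac (x i) else 0)"

lemma qn_TN: "qn n x \<in> TN"
  by (auto simp: qn_def TN_def T_set_def frac_lt_1)

lemma qn_add: "TN_add (qn n x) (qn n y) = qn n (\<lambda>i. x i + y i)"
  by (auto simp: qn_def TN_add_def T_add_def)

lemma qn_neg: "TN_neg (qn n x) = qn n (\<lambda>i. - x i)"
  by (auto simp: qn_def TN_neg_def frac_neg_frac)

lemma qn_zero: "qn n (\<lambda>i. 0) = TN_zero"
  by (auto simp: qn_def TN_zero_def)

lemma qn_int: "(\<And>i. i < n \<Longrightarrow> z i \<in> \<int>) \<Longrightarrow> qn n (\<lambda>i. x i + z i) = qn n x"
  by (auto simp: qn_def frac_add_int_right)

lemma qn_int0: "(\<And>i. i < n \<Longrightarrow> z i \<in> \<int>) \<Longrightarrow> qn n z = TN_zero"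
  by (auto simp: qn_def TN_zero_def)

lemma qn_id: "p \<in> TN \<Longrightarrow> (\<And>i. i \<ge> n \<Longrightarrow> p i = 0) \<Longrightarrow> qn n p = p"
  by (auto simp: qn_def TN_def T_set_def)

lemma proj_init_qn: "p \<in> TN \<Longrightarrow> proj_init n p = qn n p"
  by (auto simp: qn_def TN_def T_set_def proj_init_def)

lemma qn_cong: "(\<And>i. i < n \<Longrightarrow> x i = y i) \<Longrightarrow> qn n x = qn n y"
  by (auto simp: qn_def)

lemma dT_qn: "i < n \<Longrightarrow> dT (qn n x i) (qn n y i) \<le> \<bar>x i - y i\<bar>"
  by (simp add: qn_def dT_frac dT_le_abs)

lemma dT_qn_int: "i < n \<Longrightarrow> z \<in> \<int> \<Longrightarrow> dT (qn n x i) (qn n y i) \<le> \<bar>x i - y i - z\<bar>"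
  by (auto simp: qn_def dT_frac elim!: Ints_cases intro: dT_le)

lemma geom_sum_le: "(\<Sum>i<n. (1/2::real) ^ i) \<le> 2"
proof -
  have "(\<Sum>i<n. (1/2::real) ^ i) \<le> (\<Sum>i. (1/2::real) ^ i)"
    by (rule sum_le_suminf) auto
  also have "\<dots> = 2" using suminf_geometric[of "1/2::real"] by simp
  finally show ?thesis .
qed

lemma tail_bound:
  "dTN x y \<le> (\<Sum>i<n. dT (x i) (y i) / 2 ^ i) + 1 / 2 ^ n"
proof -
  have s: "summable (\<lambda>i. dT (x i) (y i) / 2 ^ i)" by (rule summable_dT)
  have "dTN x y = (\<Sum>m. dT (x (m + n)) (y (m + n)) / 2 ^ (m + n)) + (\<Sum>i<n. dT (x i) (y i) / 2 ^ i)"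
    unfolding dTN_def using suminf_split_initial_segment[OF s, of n] by simp
  moreover have "(\<Sum>m. dT (x (m + n)) (y (m + n)) / 2 ^ (m + n)) \<le> (\<Sum>m. (1 / 2 ^ (n+1)) * (1/2) ^ m)"
  proof (rule suminf_le)
    show "summable (\<lambda>m. dT (x (m + n)) (y (m + n)) / 2 ^ (m + n))"
      using summable_ignore_initial_segment[OF s, of n] by simp
    show "summable (\<lambda>m. (1 / 2 ^ (n+1)) * (1/2::real) ^ m)"
      by (intro summable_mult) simp
    fix m
    have "dT (x (m + n)) (y (m + n)) / 2 ^ (m + n) \<le> (1/2) / 2 ^ (m + n)"
      using dT_half by (intro divide_right_mono) auto
    also have "\<dots> = (1 / 2 ^ (n+1)) * (1/2) ^ m"
      by (simp add: power_add power_one_over field_simps)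
    finally show "dT (x (m + n)) (y (m + n)) / 2 ^ (m + n) \<le> (1 / 2 ^ (n+1)) * (1/2) ^ m" .
  qed
  moreover have "(\<Sum>m. (1 / 2 ^ (n+1)) * (1/2::real) ^ m) = 1 / 2 ^ n"
    using suminf_mult[of "\<lambda>m. (1/2::real)^m" "1 / 2 ^ (n+1)"] suminf_geometric[of "1/2::real"]
    by simp
  ultimately show ?thesis by linarith
qed

lemma tail_bound_eps:
  assumes "\<And>i. i < n \<Longrightarrow> dT (x i) (y i) \<le> e" and e: "0 \<le> e"
  shows "dTN x y \<le> 2 * e + 1 / 2 ^ n"
proof -
  have "(\<Sum>i<n. dT (x i) (y i) / 2 ^ i) \<le> (\<Sum>i<n. e * (1/2) ^ i)"
    by (intro sum_mono) (auto simp: power_one_over intro!: divide_right_mono assms)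
  also have "\<dots> = e * (\<Sum>i<n. (1/2) ^ i)" by (simp add: sum_distrib_left)
  also have "\<dots> \<le> e * 2" using geom_sum_le e by (intro mult_left_mono) auto
  finally show ?thesis using tail_bound[of x y n] by linarith
qed

lemma dH_le:
  assumes "A \<noteq> {}" "B \<noteq> {}"
    and AB: "\<And>a. a \<in> A \<Longrightarrow> \<exists>b\<in>B. dTN a b \<le> r"
    and BA: "\<And>b. b \<in> B \<Longrightarrow> \<exists>a\<in>A. dTN a b \<le> r"
  shows "dH A B \<le> r"
proof -
  have bA: "bdd_below ((\<lambda>b. dTN a b) ` B)" for a
    by (rule bdd_belowI[of _ 0]) (auto simp: dTN_nonneg)
  have bB: "bdd_below ((\<lambda>a. dTN a b) ` A)" for b
    by (rule bdd_belowI[of _ 0]) (auto simp: dTN_nonneg)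
  have 1: "(SUP a\<in>A. INF b\<in>B. dTN a b) \<le> r"
  proof (rule cSUP_least[OF assms(1)])
    fix a assume "a \<in> A"
    then obtain b where "b \<in> B" "dTN a b \<le> r" using AB by blast
    then show "(INF b\<in>B. dTN a b) \<le> r" using cINF_lower[OF bA[of a] \<open>b \<in> B\<close>] by linarith
  qed
  have 2: "(SUP b\<in>B. INF a\<in>A. dTN a b) \<le> r"
  proof (rule cSUP_least[OF assms(2)])
    fix b assume "b \<in> B"
    then obtain a where "a \<in> A" "dTN a b \<le> r" using BA by blast
    then show "(INF a\<in>A. dTN a b) \<le> r" using cINF_lower[OF bB[of b] \<open>a \<in> A\<close>] by linarith
  qed
  show ?thesis using 1 2 by (simp add: dH_def)
qed


lemma dTN_qn: "dTN (qn n x) (qn n y) \<le> (\<Sum>i<n. \<bar>x i - y i\<bar>)"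
proof -
  let ?g = "\<lambda>i. if i < n then \<bar>x i - y i\<bar> else 0"
  have fin: "\<And>i. i \<notin> {..<n} \<Longrightarrow> ?g i = 0" by auto
  have "dTN (qn n x) (qn n y) \<le> suminf ?g"
    unfolding dTN_def
  proof (rule suminf_le[OF _ summable_dT summable_finite[OF finite_lessThan fin]])
    fix i
    show "dT (qn n x i) (qn n y i) / 2 ^ i \<le> ?g i"
    proof (cases "i < n")
      case True
      have "dT (qn n x i) (qn n y i) / 2 ^ i \<le> dT (qn n x i) (qn n y i)"
        by (simp add: divide_le_eq one_le_power mult_le_cancel_left1 mult_le_cancel_right1)
          (metis dT_nonneg mult_le_cancel_left1 one_le_power one_le_numeral order.strict_iff_not
           mult.commute)
      also have "\<dots> \<le> \<bar>x i - y i\<bar>" by (rule dT_qn[OF True])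
      finally show ?thesis using True by simp
    next
      case False then show ?thesis by (simp add: qn_def dT_same)
    qed
  qed
  also have "\<dots> = sum ?g {..<n}" by (rule suminf_finite[OF finite_lessThan fin])
  also have "\<dots> = (\<Sum>i<n. \<bar>x i - y i\<bar>)" by simp
  finally show ?thesis .
qed

lemma cont_into_TN:
  assumes "f ` topspace X \<subseteq> TN"
    and "\<And>x e. x \<in> topspace X \<Longrightarrow> e > 0 \<Longrightarrow> \<exists>U. openin X U \<and> x \<in> U \<and> (\<forall>y\<in>U. dTN (f x) (f y) < e)"
  shows "continuous_map X TN_top f"
  unfolding TN_top_eq TNm.continuous_map_to_metric
proof (intro ballI allI impI)
  fix x e assume x: "x \<in> topspace X" and e: "(e::real) > 0"
  then obtain U where U: "openin X U" "x \<in> U" "\<forall>y\<in>U. dTN (f x) (f y) < e" using assms(2) by blast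
  have "U \<subseteq> topspace X" using U(1) openin_subset by blast
  then show "\<exists>U. openin X U \<and> x \<in> U \<and> (\<forall>y\<in>U. f y \<in> TNm.mball (f x) e)"
    using U x assms(1) by (intro exI[of _ U]) auto
qed

definition circ :: "nat \<Rightarrow> (nat \<Rightarrow> real) \<Rightarrow> real \<Rightarrow> (nat \<Rightarrow> real)" where
  "circ n w t = qn n (\<lambda>i. t * w i)"

lemma circ_add: "TN_add (circ n w s) (circ n w t) = circ n w (s + t)"
  by (simp add: circ_def qn_add distrib_right)

lemma circ_neg: "TN_neg (circ n w s) = circ n w (- s)"
  by (simp add: circ_def qn_neg)

lemma circ_zero: "circ n w 0 = TN_zero"
  by (simp add: circ_def qn_zero)

lemma circ_dist: "dTN (circ n w s) (circ n w t) \<le> \<bar>s - t\<bar> * (\<Sum>i<n. \<bar>w i\<bar>)"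
proof -
  have "dTN (circ n w s) (circ n w t) \<le> (\<Sum>i<n. \<bar>s * w i - t * w i\<bar>)"
    unfolding circ_def by (rule dTN_qn)
  also have "\<dots> = \<bar>s - t\<bar> * (\<Sum>i<n. \<bar>w i\<bar>)"
    by (simp add: sum_distrib_left abs_mult left_diff_distrib[symmetric])
  finally show ?thesis .
qed

lemma circ_int_shift:
  assumes "\<And>i. i < n \<Longrightarrow> w i \<in> \<int>" "k \<in> \<int>"
  shows "circ n w (t + k) = circ n w t"
proof -
  have "circ n w (t + k) = qn n (\<lambda>i. t * w i + k * w i)"
    unfolding circ_def by (simp add: distrib_right)
  also have "\<dots> = circ n w t"
    unfolding circ_def using assms by (intro qn_int) (auto intro: Ints_mult)
  finally show ?thesis .
qed

lemma circ_cont: "continuous_map euclideanreal TN_top (circ n w)"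
proof (rule cont_into_TN)
  show "circ n w ` topspace euclideanreal \<subseteq> TN" by (auto simp: circ_def qn_TN)
  fix x :: real and e :: real assume e: "e > 0"
  define C where "C = (\<Sum>i<n. \<bar>w i\<bar>) + 1"
  have C: "C > 0" unfolding C_def by (simp add: add_nonneg_pos sum_nonneg)
  show "\<exists>U. openin euclideanreal U \<and> x \<in> U \<and> (\<forall>y\<in>U. dTN (circ n w x) (circ n w y) < e)"
  proof (intro exI[of _ "ball x (e / C)"] conjI ballI)
    show "openin euclideanreal (ball x (e / C))" by simp
    show "x \<in> ball x (e / C)" using e C by simp
    fix y assume "y \<in> ball x (e / C)"
    then have "\<bar>x - y\<bar> < e / C" by (simp add: dist_real_def)
    then have "\<bar>x - y\<bar> * C < e" using C by (simp add: pos_less_divide_eq)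
    moreover have "\<bar>x - y\<bar> * (\<Sum>i<n. \<bar>w i\<bar>) \<le> \<bar>x - y\<bar> * C"
      unfolding C_def by (intro mult_left_mono) auto
    ultimately show "dTN (circ n w x) (circ n w y) < e" using circ_dist[of n w x y] by linarith
  qed
qed

lemma circ_range:
  assumes "\<And>i. i < n \<Longrightarrow> w i \<in> \<int>"
  shows "range (circ n w) = circ n w ` {0..1}"
proof
  show "range (circ n w) \<subseteq> circ n w ` {0..1}"
  proof
    fix y assume "y \<in> range (circ n w)"
    then obtain t where t: "y = circ n w t" by blast
    have "circ n w t = circ n w (frac t + of_int (floor t))" by (simp add: frac_def)
    also have "\<dots> = circ n w (frac t)" using assms by (intro circ_int_shift) auto
    finally show "y \<in> circ n w ` {0..1}" using t frac_lt_1[of t] by (auto intro!: imageI less_imp_le)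
  qed
qed auto

lemma circ_CTN:
  assumes "\<And>i. i < n \<Longrightarrow> w i \<in> \<int>"
  shows "range (circ n w) \<in> CTN"
proof -
  have sub: "is_subgroup_TN (range (circ n w))"
    unfolding is_subgroup_TN_def
  proof (intro conjI ballI)
    show "range (circ n w) \<subseteq> TN" by (auto simp: circ_def qn_TN)
    show "TN_zero \<in> range (circ n w)" using circ_zero[of n w] by (metis rangeI)
    fix x y assume "x \<in> range (circ n w)" "y \<in> range (circ n w)"
    then obtain s t where "x = circ n w s" "y = circ n w t" by blast
    then show "TN_add x y \<in> range (circ n w)" "TN_neg x \<in> range (circ n w)"
      by (simp_all add: circ_add circ_neg)
  qed
  have "compactin TN_top (circ n w ` {0..1})"
    by (rule image_compactin[OF _ circ_cont]) simp
  moreover have "connectedin TN_top (circ n w ` {0..1})"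
    by (rule connectedin_continuous_map_image[OF circ_cont]) simp
  ultimately show ?thesis using sub circ_range[OF assms] by (auto simp: CTN_def)
qed

lemma circ_proj_init: "proj_init n ` range (circ n w) = range (circ n w)"
proof -
  have "proj_init n (circ n w t) = circ n w t" for t
    by (auto simp: proj_init_def circ_def qn_def)
  then show ?thesis by (simp add: image_image)
qed

lemma circ_proj_tail: "proj_tail n ` range (circ n w) = {TN_zero}"
proof -
  have "proj_tail n (circ n w t) = TN_zero" for t
    by (auto simp: proj_tail_def circ_def qn_def TN_zero_def)
  then have "proj_tail n ` range (circ n w) = (\<lambda>t. TN_zero) ` UNIV" by (simp add: image_image)
  then show ?thesis by simp
qed


lemma frac_cont: "continuous_map euclideanreal T_top frac"
  unfolding T_top_eq Tm.continuous_map_to_metric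
proof (intro ballI allI impI)
  fix x :: real and e :: real assume "e > 0"
  show "\<exists>U. openin euclideanreal U \<and> x \<in> U \<and> (\<forall>y\<in>U. frac y \<in> Tm.mball (frac x) e)"
  proof (intro exI[of _ "ball x e"] conjI ballI)
    show "openin euclideanreal (ball x e)" by simp
    show "x \<in> ball x e" using \<open>e > 0\<close> by simp
    fix y assume "y \<in> ball x e"
    then have "\<bar>x - y\<bar> < e" by (simp add: dist_real_def)
    then have "dT (frac x) (frac y) < e" using dT_le_abs[of x y] by (simp add: dT_frac)
    moreover have "frac x \<in> T_set" "frac y \<in> T_set" by (auto simp: T_set_def frac_lt_1)
    ultimately show "frac y \<in> Tm.mball (frac x) e" by simp
  qed
qed

lemma T_compact: "compact_space T_top"
proof -
  have "frac ` {0..1} = T_set"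
  proof
    show "frac ` {0..1} \<subseteq> T_set" by (auto simp: T_set_def frac_lt_1)
    show "T_set \<subseteq> frac ` {0..1}"
    proof
      fix x assume "x \<in> T_set"
      then have "frac x = x" "x \<in> {0..1}" by (auto simp: T_set_def)
      then show "x \<in> frac ` {0..1}" by (metis imageI)
    qed
  qed
  moreover have "compactin T_top (frac ` {0..1})"
    by (rule image_compactin[OF _ frac_cont]) simp
  ultimately show ?thesis unfolding compact_space_def by (simp add: T_top_eq)
qed

lemma circle_group_circ:
  assumes vint: "\<And>i. i < n \<Longrightarrow> v i \<in> \<int>"
    and per: "\<And>s. 0 < s \<Longrightarrow> s < 1 \<Longrightarrow> \<not> (\<forall>i<n. s * v i \<in> \<int>)"
  shows "circle_group (range (circ n v))"
  unfolding circle_group_def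
proof (intro conjI exI[of _ "circ n v"])
  let ?H = "range (circ n v)"
  show HT: "?H \<subseteq> TN" by (auto simp: circ_def qn_TN)
  show "\<forall>a\<in>T_set. \<forall>b\<in>T_set. circ n v (T_add a b) = TN_add (circ n v a) (circ n v b)"
  proof (intro ballI)
    fix a b
    have "circ n v (T_add a b) = circ n v (frac (a + b) + of_int (floor (a + b)))"
      unfolding T_add_def using vint by (intro circ_int_shift[symmetric]) auto
    also have "\<dots> = circ n v (a + b)" by (simp add: frac_def)
    finally show "circ n v (T_add a b) = TN_add (circ n v a) (circ n v b)" by (simp add: circ_add)
  qed
  have img: "circ n v ` T_set = ?H"
  proof
    show "?H \<subseteq> circ n v ` T_set"
    proof
      fix y assume "y \<in> ?H"
      then obtain t where t: "y = circ n v t" by blast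
      have "circ n v t = circ n v (frac t + of_int (floor t))" by (simp add: frac_def)
      also have "\<dots> = circ n v (frac t)" using vint by (intro circ_int_shift) auto
      finally show "y \<in> circ n v ` T_set" using t frac_lt_1[of t] by (auto simp: T_set_def)
    qed
  qed auto
  have inj: "inj_on (circ n v) T_set"
  proof (rule inj_onI, rule ccontr)
    fix s t assume s: "s \<in> T_set" and t: "t \<in> T_set" and eq: "circ n v s = circ n v t" and ne: "s \<noteq> t"
    have d: "s * v i - t * v i \<in> \<int>" if "i < n" for i
    proof -
      have "frac (s * v i) = frac (t * v i)"
        using fun_cong[OF eq, of i] that by (simp add: circ_def qn_def)
      then obtain k where "s * v i = t * v i + of_int k" by (rule frac_eqE)
      then show ?thesis by simp
    qed
    show False
    proof (cases "s < t")
      case True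
      have "\<forall>i<n. (t - s) * v i \<in> \<int>"
      proof (intro allI impI)
        fix i assume "i < n"
        then have "- (s * v i - t * v i) \<in> \<int>" using d Ints_minus by blast
        then show "(t - s) * v i \<in> \<int>" by (simp add: algebra_simps)
      qed
      then show False using per[of "t - s"] True s t by (auto simp: T_set_def)
    next
      case False
      then have "t < s" using ne by simp
      have "\<forall>i<n. (s - t) * v i \<in> \<int>" using d by (simp add: algebra_simps)
      then show False using per[of "s - t"] \<open>t < s\<close> s t by (auto simp: T_set_def)
    qed
  qed
  have cont: "continuous_map T_top TN_top (circ n v)"
  proof (rule cont_into_TN)
    show "circ n v ` topspace T_top \<subseteq> TN" using HT by auto
    fix x e assume x: "x \<in> topspace T_top" and e: "(e::real) > 0"
    define C where "C = (\<Sum>i<n. \<bar>v i\<bar>) + 1"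
    have C: "C > 0" unfolding C_def by (simp add: add_nonneg_pos sum_nonneg)
    show "\<exists>U. openin T_top U \<and> x \<in> U \<and> (\<forall>y\<in>U. dTN (circ n v x) (circ n v y) < e)"
    proof (intro exI[of _ "Tm.mball x (e / C)"] conjI ballI)
      show "openin T_top (Tm.mball x (e / C))" by (simp add: T_top_eq)
      show "x \<in> Tm.mball x (e / C)" using x e C by (simp add: T_top_eq)
      fix y assume "y \<in> Tm.mball x (e / C)"
      then have dxy: "dT x y < e / C" by simp
      obtain r where r: "dT x y = \<bar>x - y - of_int r\<bar>" using dT_ex by blast
      have "circ n v y = circ n v (y + of_int r)" using vint by (intro circ_int_shift[symmetric]) auto
      moreover have "dTN (circ n v x) (circ n v (y + of_int r)) \<le> \<bar>x - (y + of_int r)\<bar> * (\<Sum>i<n. \<bar>v i\<bar>)"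
        by (rule circ_dist)
      moreover have "\<bar>x - (y + of_int r)\<bar> * (\<Sum>i<n. \<bar>v i\<bar>) \<le> \<bar>x - (y + of_int r)\<bar> * C"
        unfolding C_def by (intro mult_left_mono) auto
      moreover have "\<bar>x - (y + of_int r)\<bar> * C < e"
        using dxy r C by (simp add: pos_less_divide_eq algebra_simps)
      ultimately show "dTN (circ n v x) (circ n v y) < e" by simp
    qed
  qed
  show "homeomorphic_map T_top (subtopology TN_top ?H) (circ n v)"
  proof (rule continuous_imp_homeomorphic_map)
    show "continuous_map T_top (subtopology TN_top ?H) (circ n v)"
      by (rule continuous_map_into_subtopology[OF cont]) auto
    show "compact_space T_top" by (rule T_compact)
    show "Hausdorff_space (subtopology TN_top ?H)"
      by (rule Hausdorff_space_subtopology) (simp add: TN_top_eq TNm.Hausdorff_space_mtopology)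
    show "circ n v ` topspace T_top = topspace (subtopology TN_top ?H)"
      using img HT by (auto simp: T_top_eq TN_top_eq)
    show "inj_on (circ n v) (topspace T_top)" using inj by (simp add: T_top_eq)
  qed
qed

lemma circle_group_int:
  assumes wint: "\<And>i. i < n \<Longrightarrow> w i \<in> \<int>" and i0: "i0 < n" "w i0 \<noteq> 0"
  shows "circle_group (range (circ n w))"
proof -
  obtain c where c: "w i0 = of_int c" using wint[OF i0(1)] by (auto elim: Ints_cases)
  have c0: "c \<noteq> 0" using c i0 by simp
  define a where "a = nat \<bar>c\<bar>"
  have a1: "a \<ge> 1" using c0 by (simp add: a_def)
  have areal: "real a = \<bar>of_int c\<bar>" using c0 by (simp add: a_def)
  define K where "K = {k::nat. 1 \<le> k \<and> (\<forall>i<n. (real k / real a) * w i \<in> \<int>)}"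
  have aK: "a \<in> K" using a1 wint by (simp add: K_def)
  define k0 where "k0 = (LEAST k. k \<in> K)"
  have k0K: "k0 \<in> K" unfolding k0_def using aK by (rule LeastI)
  have k0min: "\<And>j. j \<in> K \<Longrightarrow> k0 \<le> j" unfolding k0_def by (rule Least_le)
  define m where "m = real k0 / real a"
  have m0: "m > 0" using k0K a1 by (simp add: m_def K_def)
  define v where "v = (\<lambda>i. m * w i)"
  have vint: "v i \<in> \<int>" if "i < n" for i using k0K that by (simp add: K_def v_def m_def)
  have per: "\<not> (\<forall>i<n. s * v i \<in> \<int>)" if s: "0 < s" "s < 1" for s
  proof
    assume all: "\<forall>i<n. s * v i \<in> \<int>"
    have "s * v i0 = s * real k0 * (of_int c / real a)" by (simp add: v_def m_def c)
    moreover have "of_int c / real a = of_int (sgn c)"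
      using c0 areal by (auto simp: sgn_if)
    ultimately have "s * v i0 = (s * real k0) * of_int (sgn c)" by simp
    then have "(s * real k0) * of_int (sgn c) \<in> \<int>" using all i0 by metis
    then have "(s * real k0) * of_int (sgn c) * of_int (sgn c) \<in> \<int>" by (rule Ints_mult) auto
    moreover have "of_int (sgn c) * of_int (sgn c) = (1::real)" using c0 by (simp add: sgn_if)
    then have "(s * real k0) * of_int (sgn c) * of_int (sgn c) = s * real k0"
      by (simp add: mult.assoc)
    ultimately have "s * real k0 \<in> \<int>" by simp
    then obtain j where j: "s * real k0 = of_int j" by (auto elim: Ints_cases)
    have k0pos: "real k0 > 0" using k0K by (simp add: K_def)
    have "of_int j > (0::real)" using j s k0pos by (simp add: j[symmetric])
    then have j0: "j > 0" by simp
    have "s * real k0 < 1 * real k0" using s k0pos by (intro mult_strict_right_mono) auto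
    then have "of_int j < real k0" using j by simp
    then have jk: "nat j < k0" using j0 by linarith
    have "nat j \<in> K"
      unfolding K_def
    proof (intro CollectI conjI allI impI)
      show "1 \<le> nat j" using j0 by simp
      fix i assume "i < n"
      have "(real (nat j) / real a) * w i = s * v i"
        using j j0 by (simp add: v_def m_def)
      then show "(real (nat j) / real a) * w i \<in> \<int>" using all \<open>i < n\<close> by simp
    qed
    then show False using k0min jk by fastforce
  qed
  have "circle_group (range (circ n v))" by (rule circle_group_circ[OF vint per]) auto
  moreover have "range (circ n v) = range (circ n w)"
  proof -
    have 1: "circ n v t = circ n w (t * m)" for t by (simp add: circ_def v_def mult.assoc)
    have 2: "circ n w t = circ n v (t / m)" for t using m0 by (simp add: circ_def v_def)
    show ?thesis
    proof
      show "range (circ n v) \<subseteq> range (circ n w)"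
      proof
        fix y assume "y \<in> range (circ n v)"
        then obtain t where "y = circ n v t" by blast
        then show "y \<in> range (circ n w)" unfolding 1 by blast
      qed
      show "range (circ n w) \<subseteq> range (circ n v)"
      proof
        fix y assume "y \<in> range (circ n w)"
        then obtain t where "y = circ n w t" by blast
        then show "y \<in> range (circ n v)" unfolding 2 by blast
      qed
    qed
  qed
  ultimately show ?thesis by simp
qed


lemma BW_fin:
  fixes u :: "nat \<Rightarrow> nat \<Rightarrow> real"
  assumes "\<And>k i. i < n \<Longrightarrow> \<bar>u k i\<bar> \<le> B"
  shows "\<exists>r l. strict_mono r \<and> (\<forall>i<n. (\<lambda>k. u (r k) i) \<longlonglongrightarrow> l i)"
  using assms
proof (induction n)
  case 0
  show ?case by (intro exI[of _ id]) (auto simp: strict_mono_def)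
next
  case (Suc n)
  have "\<exists>r l. strict_mono r \<and> (\<forall>i<n. (\<lambda>k. u (r k) i) \<longlonglongrightarrow> l i)"
    using Suc.prems by (intro Suc.IH) simp
  then obtain r l where r: "strict_mono r" and l: "\<forall>i<n. (\<lambda>k. u (r k) i) \<longlonglongrightarrow> l i" by blast
  have "bounded (range (\<lambda>k. u (r k) n))"
    using Suc.prems by (intro boundedI[of _ B]) auto
  then obtain a s where s: "strict_mono s" and a: "((\<lambda>k. u (r k) n) \<circ> s) \<longlonglongrightarrow> a"
    using bounded_imp_convergent_subsequence by blast
  show ?case
  proof (intro exI[of _ "r \<circ> s"] exI[of _ "l(n := a)"] conjI allI impI)
    show "strict_mono (r \<circ> s)" using r s by (rule strict_mono_o)
    fix i assume "i < Suc n"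
    show "(\<lambda>k. u ((r \<circ> s) k) i) \<longlonglongrightarrow> (l(n := a)) i"
    proof (cases "i = n")
      case True then show ?thesis using a by (simp add: o_def)
    next
      case False
      then have "i < n" using \<open>i < Suc n\<close> by simp
      then have "((\<lambda>k. u (r k) i) \<circ> s) \<longlonglongrightarrow> l i" using l s by (intro LIMSEQ_subseq_LIMSEQ) auto
      then show ?thesis using False by (simp add: o_def)
    qed
  qed
qed

definition nv :: "nat \<Rightarrow> (nat \<Rightarrow> real) \<Rightarrow> real" where
  "nv n x = (\<Sum>i<n. \<bar>x i\<bar>)"

lemma nv_nonneg: "0 \<le> nv n x" by (simp add: nv_def sum_nonneg)

lemma nv_coord: "i < n \<Longrightarrow> \<bar>x i\<bar> \<le> nv n x"
  unfolding nv_def by (rule member_le_sum) auto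

lemma nv_tri: "nv n (\<lambda>i. x i + y i) \<le> nv n x + nv n y"
  unfolding nv_def sum.distrib[symmetric] by (intro sum_mono abs_triangle_ineq)

lemma nv_scale: "nv n (\<lambda>i. c * x i) = \<bar>c\<bar> * nv n x"
  by (simp add: nv_def abs_mult sum_distrib_left)

lemma nv_tendsto:
  assumes "\<And>i. i < n \<Longrightarrow> (\<lambda>k. x k i) \<longlonglongrightarrow> y i"
  shows "(\<lambda>k. nv n (\<lambda>i. x k i - y i)) \<longlonglongrightarrow> 0"
proof -
  have "(\<lambda>k. \<Sum>i<n. \<bar>x k i - y i\<bar>) \<longlonglongrightarrow> (\<Sum>i<n. 0)"
    by (intro tendsto_sum tendsto_rabs_zero LIM_zero assms) auto
  then show ?thesis by (simp add: nv_def)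
qed

locale Gctx =
  fixes n :: nat and G :: "(nat \<Rightarrow> real) set"
  assumes n1: "n \<ge> 1" and GC: "G \<in> CTN"
begin

definition "P = proj_init n ` G"
definition "L = {x. qn n x \<in> P}"
definition "W = {x. \<forall>t. circ n x t \<in> P}"

lemma G_TN: "G \<subseteq> TN" using GC by (auto simp: CTN_def is_subgroup_TN_def)

lemma G_grp: "TN_zero \<in> G" "\<And>x y. x \<in> G \<Longrightarrow> y \<in> G \<Longrightarrow> TN_add x y \<in> G"
  "\<And>x. x \<in> G \<Longrightarrow> TN_neg x \<in> G"
  using GC by (auto simp: CTN_def is_subgroup_TN_def)

lemma P_qn: "g \<in> G \<Longrightarrow> proj_init n g = qn n g"
  using G_TN by (auto intro: proj_init_qn)

lemma P_elem: "p \<in> P \<Longrightarrow> \<exists>g\<in>G. p = qn n g"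
  unfolding P_def using P_qn by auto

lemma P_TN: "p \<in> P \<Longrightarrow> p \<in> TN" using P_elem qn_TN by blast

lemma P_qn_id: "p \<in> P \<Longrightarrow> qn n p = p"
proof -
  assume "p \<in> P"
  then obtain g where "p = qn n g" using P_elem by blast
  then show ?thesis by (auto simp: qn_def)
qed

lemma qn_in_P: "g \<in> G \<Longrightarrow> qn n g \<in> P"
  unfolding P_def using P_qn by force

lemma P_zero: "TN_zero \<in> P"
proof -
  have "qn n TN_zero = TN_zero" by (rule ext) (simp add: TN_zero_def qn_def)
  then show ?thesis using qn_in_P[OF G_grp(1)] by simp
qed

lemma qn_addG: "g \<in> TN \<Longrightarrow> h \<in> TN \<Longrightarrow> qn n (TN_add g h) = TN_add (qn n g) (qn n h)"
  by (auto simp: qn_def TN_add_def T_add_def TN_def T_set_def)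

lemma qn_negG: "g \<in> TN \<Longrightarrow> qn n (TN_neg g) = TN_neg (qn n g)"
  by (auto simp: qn_def TN_neg_def TN_def T_set_def)

lemma P_add: "p \<in> P \<Longrightarrow> q \<in> P \<Longrightarrow> TN_add p q \<in> P"
proof -
  assume "p \<in> P" "q \<in> P"
  then obtain g h where g: "g \<in> G" "p = qn n g" and h: "h \<in> G" "q = qn n h" using P_elem by blast
  then have "TN_add p q = qn n (TN_add g h)" using G_TN by (simp add: qn_addG subsetD)
  then show ?thesis using qn_in_P G_grp g h by simp
qed

lemma P_neg: "p \<in> P \<Longrightarrow> TN_neg p \<in> P"
proof -
  assume "p \<in> P"
  then obtain g where g: "g \<in> G" "p = qn n g" using P_elem by blast
  then have "TN_neg p = qn n (TN_neg g)" using G_TN by (simp add: qn_negG subsetD)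
  then show ?thesis using qn_in_P G_grp g by simp
qed

lemma L_add: "x \<in> L \<Longrightarrow> y \<in> L \<Longrightarrow> (\<lambda>i. x i + y i) \<in> L"
  unfolding L_def using P_add[of "qn n x" "qn n y"] by (simp add: qn_add)

lemma L_neg: "x \<in> L \<Longrightarrow> (\<lambda>i. - x i) \<in> L"
  unfolding L_def using P_neg[of "qn n x"] by (simp add: qn_neg)

lemma L_diff: "x \<in> L \<Longrightarrow> y \<in> L \<Longrightarrow> (\<lambda>i. x i - y i) \<in> L"
proof -
  assume "x \<in> L" "y \<in> L"
  then have "(\<lambda>i. x i + - y i) \<in> L" by (intro L_add L_neg)
  then show ?thesis by simp
qed

lemma L_int: "(\<And>i. i < n \<Longrightarrow> z i \<in> \<int>) \<Longrightarrow> z \<in> L"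
  unfolding L_def using qn_int0 P_zero by auto

lemma L_shift:
  assumes "\<And>i. i < n \<Longrightarrow> z i \<in> \<int>" "x \<in> L" shows "(\<lambda>i. x i + z i) \<in> L"
  by (rule L_add[OF assms(2) L_int]) (rule assms(1))

lemma L_nat_mult: "x \<in> L \<Longrightarrow> (\<lambda>i. real k * x i) \<in> L"
proof (induction k)
  case 0 then show ?case using L_int[of "\<lambda>i. 0"] by simp
next
  case (Suc k)
  then have "(\<lambda>i. real k * x i + x i) \<in> L" by (intro L_add) auto
  then show ?case by (simp add: distrib_right add.commute)
qed

lemma L_int_mult: "x \<in> L \<Longrightarrow> (\<lambda>i. of_int k * x i) \<in> L"
proof (cases "k \<ge> 0")
  case True
  assume "x \<in> L"
  then have "(\<lambda>i. real (nat k) * x i) \<in> L" by (rule L_nat_mult)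
  then show ?thesis using True by simp
next
  case False
  assume "x \<in> L"
  then have "(\<lambda>i. - (real (nat (-k)) * x i)) \<in> L" by (intro L_neg L_nat_mult)
  then show ?thesis using False by simp
qed

lemma L_closed:
  assumes xL: "\<And>k. x k \<in> L" and lim: "\<And>i. i < n \<Longrightarrow> (\<lambda>k. x k i) \<longlonglongrightarrow> y i"
  shows "y \<in> L"
proof -
  have "\<forall>k. \<exists>g. g \<in> G \<and> qn n (x k) = qn n g"
    using xL P_elem by (auto simp: L_def)
  then obtain g where g0: "\<forall>k. g k \<in> G \<and> qn n (x k) = qn n (g k)" by (rule choice_iff[THEN iffD1, elim_format]) blast
  then have g: "\<And>k. g k \<in> G" "\<And>k. qn n (x k) = qn n (g k)" by auto
  have "compactin TNm.mtopology G" using GC by (simp add: CTN_def TN_top_eq)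
  then obtain l r where l: "l \<in> G" and r: "strict_mono r"
    and lim2: "limitin TNm.mtopology (g \<circ> r) l sequentially"
    unfolding TNm.compactin_sequentially using g(1) by blast
  have dl: "(\<lambda>k. dTN ((g \<circ> r) k) l) \<longlonglongrightarrow> 0"
    using lim2 by (simp add: TNm.limitin_metric_dist_null)
  have li: "l i = qn n y i" if i: "i < n" for i
  proof -
    have a: "(\<lambda>k. dT (g (r k) i) (l i)) \<longlonglongrightarrow> 0"
    proof (rule Lim_null_comparison)
      show "\<forall>\<^sub>F k in sequentially. norm (dT (g (r k) i) (l i)) \<le> 2 ^ i * dTN ((g \<circ> r) k) l"
        using term_le_dTN[where x="g (r k)" and y=l and i=i for k] by (auto simp: field_simps)
      show "(\<lambda>k. 2 ^ i * dTN ((g \<circ> r) k) l) \<longlonglongrightarrow> 0"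
        using tendsto_mult_left[OF dl, of "2 ^ i"] by simp
    qed
    have b: "(\<lambda>k. \<bar>x (r k) i - y i\<bar>) \<longlonglongrightarrow> 0"
    proof -
      have "(\<lambda>k. x (r k) i) \<longlonglongrightarrow> y i"
        using LIMSEQ_subseq_LIMSEQ[OF lim[OF i] r] by (simp add: o_def)
      then show ?thesis by (intro tendsto_rabs_zero LIM_zero)
    qed
    have c: "(\<lambda>k. dT (g (r k) i) (l i) + \<bar>x (r k) i - y i\<bar>) \<longlonglongrightarrow> 0"
      using tendsto_add[OF a b] by simp
    have gi: "g (r k) i = qn n (g (r k)) i" for k
      using g(1)[of "r k"] G_TN i by (auto simp: qn_def TN_def T_set_def)
    have "dT (l i) (qn n y i) \<le> dT (g (r k) i) (l i) + \<bar>x (r k) i - y i\<bar>" for k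
    proof -
      have "dT (l i) (qn n y i) \<le> dT (l i) (g (r k) i) + dT (g (r k) i) (qn n y i)"
        by (rule dT_triangle)
      moreover have "dT (g (r k) i) (qn n y i) = dT (qn n (x (r k)) i) (qn n y i)"
        using gi g(2) by simp
      moreover have "dT (qn n (x (r k)) i) (qn n y i) \<le> \<bar>x (r k) i - y i\<bar>" by (rule dT_qn[OF i])
      ultimately show ?thesis by (simp add: dT_commute)
    qed
    then have "dT (l i) (qn n y i) \<le> 0"
      by (intro LIMSEQ_le_const[OF c]) auto
    then have "dT (l i) (qn n y i) = 0" using dT_nonneg[of "l i" "qn n y i"] by linarith
    moreover have "l i \<in> T_set" using l G_TN by (auto simp: TN_def)
    moreover have "qn n y i \<in> T_set" using qn_TN[of n y] by (auto simp: TN_def)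
    ultimately show "l i = qn n y i" using dT_zero by blast
  qed
  have lT: "l i \<in> T_set" for i using l G_TN by (auto simp: TN_def)
  have "qn n y = qn n l"
  proof
    fix i show "qn n y i = qn n l i"
      using li[of i] lT[of i] by (cases "i < n") (auto simp: qn_def T_set_def)
  qed
  then show ?thesis using qn_in_P[OF l] by (simp add: L_def)
qed

end

context Gctx
begin

lemma W_iff: "x \<in> W \<longleftrightarrow> (\<forall>t. (\<lambda>i. t * x i) \<in> L)"
  by (simp add: W_def L_def circ_def)

lemma W_L: "x \<in> W \<Longrightarrow> x \<in> L"
  using W_iff[of x] by (metis (no_types) mult_1 ext)

lemma W_add: "x \<in> W \<Longrightarrow> y \<in> W \<Longrightarrow> (\<lambda>i. x i + y i) \<in> W"
  unfolding W_iff using L_add by (simp add: distrib_left)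

lemma W_scale: "x \<in> W \<Longrightarrow> (\<lambda>i. c * x i) \<in> W"
  unfolding W_iff by (simp add: mult.assoc[symmetric])

lemma W_zero: "(\<lambda>i. 0) \<in> W"
  unfolding W_iff using L_int[of "\<lambda>i. 0"] by simp

lemma W_diff: "x \<in> W \<Longrightarrow> y \<in> W \<Longrightarrow> (\<lambda>i. x i - y i) \<in> W"
proof -
  assume "x \<in> W" "y \<in> W"
  then have "(\<lambda>i. x i + (-1) * y i) \<in> W" by (intro W_add W_scale)
  then show ?thesis by simp
qed

lemma W_closed:
  assumes "\<And>k. x k \<in> W" "\<And>i. i < n \<Longrightarrow> (\<lambda>k. x k i) \<longlonglongrightarrow> y i"
  shows "y \<in> W"
  unfolding W_iff
proof
  fix t
  show "(\<lambda>i. t * y i) \<in> L"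
    by (rule L_closed[of "\<lambda>k i. t * x k i"]) (use assms W_iff in \<open>auto intro: tendsto_mult\<close>)
qed

definition "dW x = Inf ((\<lambda>w. nv n (\<lambda>i. x i - w i)) ` W)"

lemma dW_bdd: "bdd_below ((\<lambda>w. nv n (\<lambda>i. x i - w i)) ` W)"
  by (rule bdd_belowI[of _ 0]) (auto simp: nv_nonneg)

lemma dW_le: "w \<in> W \<Longrightarrow> dW x \<le> nv n (\<lambda>i. x i - w i)"
  unfolding dW_def by (rule cInf_lower[OF _ dW_bdd]) auto

lemma dW_ge: "(\<And>w. w \<in> W \<Longrightarrow> c \<le> nv n (\<lambda>i. x i - w i)) \<Longrightarrow> c \<le> dW x"
  unfolding dW_def by (rule cInf_greatest) (use W_zero in auto)

lemma dW_nonneg: "0 \<le> dW x"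
  by (rule dW_ge) (simp add: nv_nonneg)

lemma dW_nv: "dW x \<le> nv n x"
  using dW_le[OF W_zero, of x] by simp

lemma dW_W: "u \<in> W \<Longrightarrow> dW u = 0"
  using dW_le[of u u] dW_nonneg[of u] by (simp add: nv_def)

lemma dW_lip: "dW x \<le> dW y + nv n (\<lambda>i. x i - y i)"
proof -
  have "dW x - nv n (\<lambda>i. x i - y i) \<le> dW y"
  proof (rule dW_ge)
    fix w assume "w \<in> W"
    have "dW x \<le> nv n (\<lambda>i. x i - w i)" by (rule dW_le[OF \<open>w \<in> W\<close>])
    also have "\<dots> \<le> nv n (\<lambda>i. x i - y i) + nv n (\<lambda>i. y i - w i)"
      using nv_tri[of n "\<lambda>i. x i - y i" "\<lambda>i. y i - w i"] by simp
    finally show "dW x - nv n (\<lambda>i. x i - y i) \<le> nv n (\<lambda>i. y i - w i)" by simp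
  qed
  then show ?thesis by simp
qed

lemma dW_shift: "w \<in> W \<Longrightarrow> dW (\<lambda>i. x i - w i) = dW x"
proof (rule antisym)
  assume w: "w \<in> W"
  show "dW (\<lambda>i. x i - w i) \<le> dW x"
  proof (rule dW_ge)
    fix w' assume "w' \<in> W"
    then have "(\<lambda>i. w' i - w i) \<in> W" using w by (rule W_diff)
    then have "dW (\<lambda>i. x i - w i) \<le> nv n (\<lambda>i. (x i - w i) - (w' i - w i))" by (rule dW_le)
    then show "dW (\<lambda>i. x i - w i) \<le> nv n (\<lambda>i. x i - w' i)" by simp
  qed
  show "dW x \<le> dW (\<lambda>i. x i - w i)"
  proof (rule dW_ge)
    fix w' assume "w' \<in> W"
    then have "(\<lambda>i. w i + w' i) \<in> W" using w by (intro W_add)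
    then have "dW x \<le> nv n (\<lambda>i. x i - (w i + w' i))" by (rule dW_le)
    then show "dW x \<le> nv n (\<lambda>i. x i - w i - w' i)" by (simp add: algebra_simps)
  qed
qed

lemma dW_scale:
  assumes c: "c > 0" shows "dW (\<lambda>i. c * x i) = c * dW x"
proof (rule antisym)
  show "dW (\<lambda>i. c * x i) \<le> c * dW x"
  proof -
    have "dW (\<lambda>i. c * x i) / c \<le> dW x"
    proof (rule dW_ge)
      fix w assume "w \<in> W"
      then have "(\<lambda>i. c * w i) \<in> W" by (rule W_scale)
      then have "dW (\<lambda>i. c * x i) \<le> nv n (\<lambda>i. c * x i - c * w i)" by (rule dW_le)
      also have "\<dots> = c * nv n (\<lambda>i. x i - w i)"
        using nv_scale[of n c "\<lambda>i. x i - w i"] c by (simp add: right_diff_distrib)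
      finally show "dW (\<lambda>i. c * x i) / c \<le> nv n (\<lambda>i. x i - w i)"
        using c by (simp add: divide_le_eq mult.commute)
    qed
    then show ?thesis using c by (simp add: divide_le_eq mult.commute)
  qed
  show "c * dW x \<le> dW (\<lambda>i. c * x i)"
  proof (rule dW_ge)
    fix w assume "w \<in> W"
    then have "(\<lambda>i. (1/c) * w i) \<in> W" by (rule W_scale)
    then have "dW x \<le> nv n (\<lambda>i. x i - (1/c) * w i)" by (rule dW_le)
    also have "\<dots> = nv n (\<lambda>i. (1/c) * (c * x i - w i))"
      using c by (simp add: right_diff_distrib)
    also have "\<dots> = (1/c) * nv n (\<lambda>i. c * x i - w i)" using c nv_scale[of n "1/c" "\<lambda>i. c * x i - w i"] by simp
    finally show "c * dW x \<le> nv n (\<lambda>i. c * x i - w i)"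
      using c by (simp add: field_simps)
  qed
qed

lemma dW_zero_W: "dW x = 0 \<Longrightarrow> x \<in> W"
proof -
  assume d: "dW x = 0"
  have "\<exists>w. w \<in> W \<and> nv n (\<lambda>i. x i - w i) < 1 / Suc k" for k
  proof (rule ccontr)
    assume "\<not> ?thesis"
    then have "1 / Suc k \<le> dW x" by (intro dW_ge) force
    then show False using d by simp
  qed
  then obtain w where w: "\<And>k. w k \<in> W" "\<And>k. nv n (\<lambda>i. x i - w k i) < 1 / Suc k" by metis
  show "x \<in> W"
  proof (rule W_closed[of w])
    show "w k \<in> W" for k by (rule w(1))
    fix i assume i: "i < n"
    have "(\<lambda>k. w k i - x i) \<longlonglongrightarrow> 0"
    proof (rule Lim_null_comparison)
      have "\<forall>k. norm (w k i - x i) \<le> 1 / Suc k"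
      proof
        fix k
        have "\<bar>x i - w k i\<bar> \<le> nv n (\<lambda>i. x i - w k i)" by (rule nv_coord[OF i])
        then show "norm (w k i - x i) \<le> 1 / Suc k" using w(2)[of k]
          by (simp add: abs_minus_commute)
      qed
      then show "\<forall>\<^sub>F k in sequentially. norm (w k i - x i) \<le> 1 / Suc k"
        by (rule always_eventually)
      show "(\<lambda>k. 1 / real (Suc k)) \<longlonglongrightarrow> 0"
        using LIMSEQ_Suc[OF lim_const_over_n[of 1]] by simp
    qed
    then show "(\<lambda>k. w k i) \<longlonglongrightarrow> x i" by (simp add: LIM_zero_iff)
  qed
qed

end

context Gctx
begin

lemma G1: "\<exists>\<delta>>0. \<forall>x\<in>L. nv n x < \<delta> \<longrightarrow> x \<in> W"
proof (rule ccontr)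
  assume "\<not> ?thesis"
  then have H: "\<And>\<delta>. \<delta> > 0 \<Longrightarrow> \<exists>x. x \<in> L \<and> nv n x < \<delta> \<and> x \<notin> W" by force
  have "\<forall>k. \<exists>x. x \<in> L \<and> nv n x < 1 / Suc k \<and> x \<notin> W" using H by simp
  then obtain xs where xs: "\<And>k. xs k \<in> L" "\<And>k. nv n (xs k) < 1 / Suc k" "\<And>k. xs k \<notin> W"
    by metis
  have dpos: "dW (xs k) > 0" for k
    using dW_nonneg[of "xs k"] dW_zero_W[of "xs k"] xs(3)[of k] by linarith
  have "\<exists>w. w \<in> W \<and> nv n (\<lambda>i. xs k i - w i) < 2 * dW (xs k)" for k
  proof (rule ccontr)
    assume "\<not> ?thesis"
    then have "2 * dW (xs k) \<le> dW (xs k)" by (intro dW_ge) force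
    then show False using dpos[of k] by simp
  qed
  then obtain ws where ws: "\<And>k. ws k \<in> W" "\<And>k. nv n (\<lambda>i. xs k i - ws k i) < 2 * dW (xs k)"
    by metis
  define ys where "ys k = (\<lambda>i. xs k i - ws k i)" for k
  define N where "N k = nv n (ys k)" for k
  have ysL: "ys k \<in> L" for k unfolding ys_def by (intro L_diff xs(1) W_L ws(1))
  have dys: "dW (ys k) = dW (xs k)" for k unfolding ys_def by (rule dW_shift[OF ws(1)])
  have Nlt: "N k < 2 * dW (ys k)" for k
  proof -
    have "N k < 2 * dW (xs k)" using ws(2)[of k] by (simp add: N_def ys_def)
    then show ?thesis using dys[of k] by simp
  qed
  have Nge: "dW (ys k) \<le> N k" for k unfolding N_def using dW_nv .
  have Npos: "N k > 0" for k using Nge[of k] dys[of k] dpos[of k] by simp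
  have Nsmall: "N k < 2 / Suc k" for k
  proof -
    have "dW (ys k) \<le> nv n (xs k)" using dys dW_nv by simp
    then show ?thesis using Nlt[of k] xs(2)[of k] by simp
  qed
  define us where "us k = (\<lambda>i. (1 / N k) * ys k i)" for k
  have usb: "\<bar>us k i\<bar> \<le> 1" if "i < n" for k i
  proof -
    have "\<bar>ys k i\<bar> \<le> N k" unfolding N_def by (rule nv_coord[OF that])
    then show ?thesis using Npos[of k] by (simp add: us_def abs_mult divide_le_eq)
  qed
  have dus: "dW (us k) > 1/2" for k
  proof -
    have "dW (us k) = (1 / N k) * dW (ys k)" unfolding us_def
      using Npos[of k] by (intro dW_scale) simp
    then have "dW (ys k) = N k * dW (us k)" using Npos[of k] by simp
    then have "N k * 1 < N k * (2 * dW (us k))" using Nlt[of k] by (simp add: algebra_simps)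
    then have "1 < 2 * dW (us k)" using mult_less_cancel_left_pos[OF Npos[of k]] by blast
    then show ?thesis by simp
  qed
  obtain r u where r: "strict_mono r" and u: "\<And>i. i < n \<Longrightarrow> (\<lambda>k. us (r k) i) \<longlonglongrightarrow> u i"
    using BW_fin[of n us 1] usb by blast
  have Nr: "(\<lambda>k. N (r k)) \<longlonglongrightarrow> 0"
  proof (rule Lim_null_comparison)
    have "N (r k) \<le> 2 / Suc k" for k
    proof -
      have "k \<le> r k" using r by (rule strict_mono_imp_increasing)
      then have "2 / real (Suc (r k)) \<le> 2 / real (Suc k)" by (intro divide_left_mono) auto
      then show ?thesis using Nsmall[of "r k"] by simp
    qed
    then show "\<forall>\<^sub>F k in sequentially. norm (N (r k)) \<le> 2 / Suc k"
      using Npos by (intro always_eventually) (simp add: less_imp_le)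
    show "(\<lambda>k. 2 / real (Suc k)) \<longlonglongrightarrow> 0"
      using LIMSEQ_Suc[OF lim_const_over_n[of 2]] by simp
  qed
  have uW: "u \<in> W"
    unfolding W_iff
  proof
    fix t
    define m where "m k = floor (t / N (r k))" for k
    have zL: "(\<lambda>i. of_int (m k) * ys (r k) i) \<in> L" for k by (intro L_int_mult ysL)
    have am: "(\<lambda>k. of_int (m k) * N (r k)) \<longlonglongrightarrow> t"
    proof -
      have "(\<lambda>k. of_int (m k) * N (r k) - t) \<longlonglongrightarrow> 0"
      proof (rule Lim_null_comparison)
        have "\<bar>of_int (m k) * N (r k) - t\<bar> \<le> N (r k)" for k
        proof -
          have p: "N (r k) > 0" by (rule Npos)
          have "of_int (m k) \<le> t / N (r k)" "t / N (r k) < of_int (m k) + 1"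
            unfolding m_def by linarith+
          then have "of_int (m k) * N (r k) \<le> t" "t < (of_int (m k) + 1) * N (r k)"
            using p by (simp_all add: le_divide_eq divide_less_eq)
          then show ?thesis by (simp add: algebra_simps)
        qed
        then show "\<forall>\<^sub>F k in sequentially. norm (of_int (m k) * N (r k) - t) \<le> N (r k)"
          by (intro always_eventually) simp
        show "(\<lambda>k. N (r k)) \<longlonglongrightarrow> 0" by (rule Nr)
      qed
      then show ?thesis by (simp add: LIM_zero_iff)
    qed
    show "(\<lambda>i. t * u i) \<in> L"
    proof (rule L_closed[of "\<lambda>k i. of_int (m k) * ys (r k) i"])
      show "(\<lambda>i. of_int (m k) * ys (r k) i) \<in> L" for k by (rule zL)
      fix i assume i: "i < n"
      have e: "of_int (m k) * ys (r k) i = (of_int (m k) * N (r k)) * us (r k) i" for k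
        using Npos[of "r k"] by (simp add: us_def)
      show "(\<lambda>k. of_int (m k) * ys (r k) i) \<longlonglongrightarrow> t * u i"
        unfolding e by (intro tendsto_mult am u i)
    qed
  qed
  have "(\<lambda>k. nv n (\<lambda>i. us (r k) i - u i)) \<longlonglongrightarrow> 0" by (rule nv_tendsto) (rule u)
  moreover have "1/2 \<le> nv n (\<lambda>i. us (r k) i - u i)" for k
    using dW_lip[of "us (r k)" u] dW_W[OF uW] dus[of "r k"] by simp
  ultimately have "1/2 \<le> (0::real)" by (intro LIMSEQ_le_const) auto
  then show False by simp
qed

lemma near_S:
  assumes d: "\<delta> > 0" "\<forall>x\<in>L. nv n x < \<delta> \<longrightarrow> x \<in> W"
    and g: "g \<in> G" and h: "h \<in> G" and gh: "dTN g h < \<delta> / (real n * 2 ^ n)"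
    and hS: "qn n h \<in> qn n ` W"
  shows "qn n g \<in> qn n ` W"
proof -
  define c where "c i = (g i - h i) - of_int (round (g i - h i))" for i
  have cabs: "\<bar>c i\<bar> = dT (g i) (h i)" for i by (simp add: c_def dT_def)
  have n0: "real n * 2 ^ n > 0" using n1 by simp
  have "nv n c \<le> (\<Sum>i<n. 2 ^ n * dTN g h)"
    unfolding nv_def
  proof (rule sum_mono)
    fix i assume "i \<in> {..<n}"
    then have "(2::real) ^ i \<le> 2 ^ n" by (intro power_increasing) auto
    moreover have "dT (g i) (h i) \<le> 2 ^ i * dTN g h"
      using term_le_dTN[of g i h] by (simp add: field_simps)
    ultimately show "\<bar>c i\<bar> \<le> 2 ^ n * dTN g h" unfolding cabs
      by (meson dTN_nonneg mult_right_mono order_trans)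
  qed
  also have "\<dots> = (real n * 2 ^ n) * dTN g h" by simp
  also have "\<dots> < \<delta>" using gh n0 by (simp add: less_divide_eq mult.commute)
  finally have cn: "nv n c < \<delta>" .
  have qc: "qn n c = qn n (\<lambda>i. g i + - h i)"
    unfolding c_def by (simp add: qn_int[of n "\<lambda>i. - of_int (round (g i - h i))" "\<lambda>i. g i - h i", symmetric])
  have "qn n (\<lambda>i. g i + - h i) = TN_add (qn n g) (TN_neg (qn n h))"
    by (simp add: qn_add qn_neg)
  moreover have "TN_add (qn n g) (TN_neg (qn n h)) \<in> P"
    using g h by (intro P_add P_neg qn_in_P)
  ultimately have "c \<in> L" using qc by (simp add: L_def)
  then have cW: "c \<in> W" using d cn by blast
  obtain w where w: "w \<in> W" "qn n h = qn n w" using hS by blast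
  have "qn n g = qn n (\<lambda>i. (h i + c i) + of_int (round (g i - h i)))"
    by (rule qn_cong) (simp add: c_def)
  also have "\<dots> = qn n (\<lambda>i. h i + c i)" by (rule qn_int) simp
  also have "\<dots> = TN_add (qn n h) (qn n c)" by (simp add: qn_add)
  also have "\<dots> = qn n (\<lambda>i. w i + c i)" using w by (simp add: qn_add)
  finally show ?thesis using W_add[OF w(1) cW] by blast
qed

lemma P_W: "p \<in> P \<Longrightarrow> \<exists>w\<in>W. p = qn n w"
proof -
  assume pP: "p \<in> P"
  obtain \<delta> where d: "\<delta> > 0" "\<forall>x\<in>L. nv n x < \<delta> \<longrightarrow> x \<in> W" using G1 by blast
  define \<rho> where "\<rho> = \<delta> / (real n * 2 ^ n)"
  have rho: "\<rho> > 0" using d n1 by (simp add: \<rho>_def)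
  define S where "S = qn n ` W"
  have cl: "qn n g \<in> S \<longleftrightarrow> qn n h \<in> S" if "g \<in> G" "h \<in> G" "dTN g h < \<rho>" for g h
    using near_S[OF d, of g h] near_S[OF d, of h g] that TNm.commute[of g h]
    unfolding S_def \<rho>_def by auto
  define E1 where "E1 = \<Union>{TNm.mball h \<rho> | h. h \<in> G \<and> qn n h \<in> S}"
  define E2 where "E2 = \<Union>{TNm.mball h \<rho> | h. h \<in> G \<and> qn n h \<notin> S}"
  have o1: "openin TN_top E1" unfolding E1_def TN_top_eq by (intro openin_Union) auto
  have o2: "openin TN_top E2" unfolding E2_def TN_top_eq by (intro openin_Union) auto
  have cov: "G \<subseteq> E1 \<union> E2"
  proof
    fix g assume g: "g \<in> G"
    then have "g \<in> TNm.mball g \<rho>" using G_TN rho by auto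
    then show "g \<in> E1 \<union> E2" unfolding E1_def E2_def using g by blast
  qed
  have dis: "E1 \<inter> E2 \<inter> G = {}"
  proof (rule ccontr)
    assume "E1 \<inter> E2 \<inter> G \<noteq> {}"
    then obtain g h1 h2 where g: "g \<in> G" and h1: "h1 \<in> G" "qn n h1 \<in> S" "g \<in> TNm.mball h1 \<rho>"
      and h2: "h2 \<in> G" "qn n h2 \<notin> S" "g \<in> TNm.mball h2 \<rho>"
      unfolding E1_def E2_def by blast
    have "dTN g h1 < \<rho>" "dTN g h2 < \<rho>" using h1(3) h2(3) TNm.commute by auto
    then show False using cl[OF g h1(1)] cl[OF g h2(1)] h1(2) h2(2) by blast
  qed
  have ne1: "E1 \<inter> G \<noteq> {}"
  proof -
    have "qn n TN_zero = qn n (\<lambda>i. 0)" by (simp add: TN_zero_def)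
    then have "qn n TN_zero \<in> S" unfolding S_def using W_zero by blast
    then have "TN_zero \<in> E1" unfolding E1_def using G_grp(1) G_TN rho by blast
    then show ?thesis using G_grp(1) by blast
  qed
  have conn: "connectedin TN_top G" using GC by (simp add: CTN_def)
  have "E2 \<inter> G = {}" using connectedinD[OF conn o1 o2 cov dis ne1] by blast
  obtain g where g: "g \<in> G" "p = qn n g" using P_elem[OF pP] by blast
  have "qn n g \<in> S"
  proof (rule ccontr)
    assume "qn n g \<notin> S"
    then have "g \<in> E2" unfolding E2_def using g G_TN rho by blast
    then show False using \<open>E2 \<inter> G = {}\<close> g by blast
  qed
  then show ?thesis using g unfolding S_def by blast
qed

end

lemma floor_close:
  assumes M: "(M::nat) \<ge> 1" and e: "floor (real M * a) = floor (real M * b)"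
  shows "\<bar>a - b\<bar> < 1 / real M"
proof -
  have "\<bar>real M * a - real M * b\<bar> < 1" using e by linarith
  then have "real M * \<bar>a - b\<bar> < 1" by (simp add: abs_mult right_diff_distrib[symmetric])
  then show ?thesis using M by (simp add: less_divide_eq mult.commute)
qed

definition cellf :: "nat \<Rightarrow> nat \<Rightarrow> (nat \<Rightarrow> real) \<Rightarrow> (nat \<Rightarrow> nat)" where
  "cellf n M x = restrict (\<lambda>i. nat (floor (real M * frac (x i)))) {..<n}"

lemma cellf_in: "M \<ge> 1 \<Longrightarrow> cellf n M x \<in> (\<Pi>\<^sub>E i\<in>{..<n}. {..<M})"
proof -
  assume M: "M \<ge> 1"
  have "nat (floor (real M * frac (x i))) < M" for i
  proof -
    have "real M * frac (x i) < real M" using M frac_lt_1[of "x i"] by simp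
    then have "floor (real M * frac (x i)) < int M" by (simp add: floor_less_iff)
    moreover have "0 \<le> floor (real M * frac (x i))" by simp
    ultimately show ?thesis by (simp add: nat_less_iff)
  qed
  then show ?thesis by (auto simp: cellf_def)
qed

lemma cellf_close:
  assumes "M \<ge> 1" "cellf n M x = cellf n M y" "i < n"
  shows "\<bar>frac (x i) - frac (y i)\<bar> < 1 / real M"
proof (rule floor_close[OF assms(1)])
  have "nat (floor (real M * frac (x i))) = nat (floor (real M * frac (y i)))"
    using fun_cong[OF assms(2), of i] assms(3) by (simp add: cellf_def)
  moreover have "0 \<le> floor (real M * frac (x i))" "0 \<le> floor (real M * frac (y i))" by simp_all
  ultimately show "floor (real M * frac (x i)) = floor (real M * frac (y i))" using eq_nat_nat_iff by blast
qed

lemma cells_sub: "M \<ge> 1 \<Longrightarrow> cellf n M ` A \<subseteq> (\<Pi>\<^sub>E i\<in>{..<n}. {..<M})"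
  using cellf_in by blast

lemma cells_finite: "M \<ge> 1 \<Longrightarrow> finite (cellf n M ` A)"
  by (rule finite_subset[OF cells_sub]) (auto intro: finite_PiE)

lemma cells_card: "M \<ge> 1 \<Longrightarrow> card (cellf n M ` A) \<le> M ^ n"
proof -
  assume M: "M \<ge> 1"
  have "card (cellf n M ` A) \<le> card (\<Pi>\<^sub>E i\<in>{..<n}. {..<M})"
    by (rule card_mono[OF _ cells_sub[OF M]]) (auto intro: finite_PiE)
  also have "\<dots> = M ^ n" by (simp add: card_PiE)
  finally show ?thesis .
qed

lemma dirichlet:
  fixes n :: nat and w :: "nat \<Rightarrow> real"
  assumes M: "(M::nat) \<ge> 1"
  shows "\<exists>k::nat. k \<ge> 1 \<and> (\<forall>i<n. \<exists>z::int. \<bar>real k * w i - of_int z\<bar> < 1 / real M)"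
proof -
  define J where "J = {0..M ^ n}"
  define f where "f j = cellf n M (\<lambda>i. real j * w i)" for j
  have "card (f ` J) \<le> M ^ n" unfolding f_def
    using cells_card[OF M, of n "(\<lambda>j i. real j * w i) ` J"] by (simp add: image_image)
  moreover have "card J = M ^ n + 1" by (simp add: J_def)
  ultimately have "\<not> inj_on f J" by (intro pigeonhole) simp
  then obtain j1 j2 where j: "j1 \<in> J" "j2 \<in> J" "f j1 = f j2" "j1 \<noteq> j2"
    unfolding inj_on_def by blast
  have key: "\<exists>k::nat. k \<ge> 1 \<and> (\<forall>i<n. \<exists>z::int. \<bar>real k * w i - of_int z\<bar> < 1 / real M)"
    if lt: "a < b" and eq: "f a = f b" for a b
  proof (intro exI[of _ "b - a"] conjI allI impI)
    show "b - a \<ge> 1" using lt by simp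
    fix i assume i: "i < n"
    have c: "\<bar>frac (real b * w i) - frac (real a * w i)\<bar> < 1 / real M"
      using cellf_close[OF M _ i] eq[symmetric] by (simp add: f_def)
    have "real (b - a) * w i = (frac (real b * w i) - frac (real a * w i))
        + of_int (floor (real b * w i) - floor (real a * w i))"
      using lt by (simp add: frac_def of_nat_diff left_diff_distrib)
    then show "\<exists>z::int. \<bar>real (b - a) * w i - of_int z\<bar> < 1 / real M"
      using c by (intro exI[of _ "floor (real b * w i) - floor (real a * w i)"]) simp
  qed
  show ?thesis
  proof (cases "j1 < j2")
    case True then show ?thesis using key j(3) by blast
  next
    case False then have "j2 < j1" using j(4) by simp
    then show ?thesis using key j(3) by metis
  qed
qed

lemma net_exists:
  assumes M: "(M::nat) \<ge> 1" and sub: "A \<subseteq> TN"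
  shows "\<exists>N. finite N \<and> N \<subseteq> A \<and> (\<forall>p\<in>A. \<exists>p'\<in>N. \<forall>i<n. \<bar>p i - p' i\<bar> < 1 / real M)"
proof -
  define rep where "rep c = (SOME p. p \<in> A \<and> cellf n M p = c)" for c
  define N where "N = rep ` (cellf n M ` A)"
  have repP: "rep (cellf n M p) \<in> A \<and> cellf n M (rep (cellf n M p)) = cellf n M p" if "p \<in> A" for p
    unfolding rep_def by (rule someI[of _ p]) (use that in auto)
  show ?thesis
  proof (intro exI[of _ N] conjI ballI)
    show "finite N" unfolding N_def using cells_finite[OF M] by blast
    show "N \<subseteq> A" unfolding N_def using repP by blast
    fix p assume p: "p \<in> A"
    let ?p' = "rep (cellf n M p)"
    have "?p' \<in> N" unfolding N_def using p by blast
    moreover have "\<forall>i<n. \<bar>p i - ?p' i\<bar> < 1 / real M"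
    proof (intro allI impI)
      fix i assume i: "i < n"
      have "\<bar>frac (p i) - frac (?p' i)\<bar> < 1 / real M"
        using cellf_close[OF M _ i] repP[OF p] by metis
      moreover have "frac (p i) = p i" "frac (?p' i) = ?p' i"
        using p repP[OF p] sub by (auto simp: TN_def T_set_def)
      ultimately show "\<bar>p i - ?p' i\<bar> < 1 / real M" by simp
    qed
    ultimately show "\<exists>p'\<in>N. \<forall>i<n. \<bar>p i - p' i\<bar> < 1 / real M" by blast
  qed
qed


context Gctx
begin

lemma W_sum: fixes m :: nat shows "(\<And>l. l < m \<Longrightarrow> Z l \<in> W) \<Longrightarrow> (\<lambda>i. \<Sum>l<m. c l * Z l i) \<in> W"
proof (induction m)
  case 0 then show ?case using W_zero by simp
next
  case (Suc m)
  have "(\<lambda>i. (\<Sum>l<m. c l * Z l i) + c m * Z m i) \<in> W"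
    using Suc by (intro W_add W_scale) auto
  then show ?case by simp
qed

lemma approx_point:
  assumes w0: "w0 \<in> W" and e: "e > 0"
  shows "\<exists>Z (K::nat). (\<forall>i<n. Z i \<in> \<int>) \<and> Z \<in> W \<and> K \<ge> 1 \<and> (\<forall>i<n. \<bar>w0 i - Z i / real K\<bar> < e)"
proof -
  obtain \<delta> where d: "\<delta> > 0" "\<forall>x\<in>L. nv n x < \<delta> \<longrightarrow> x \<in> W" using G1 by blast
  obtain M0 :: nat where M0: "max (real n / \<delta>) (1 / e) < real M0" using reals_Archimedean2 by blast
  define M where "M = M0 + 1"
  have M1: "M \<ge> 1" by (simp add: M_def)
  have Mpos: "real M > 0" by (simp add: M_def)
  have Mn: "real n / real M < \<delta>"
  proof -
    have "real n / \<delta> < real M" using M0 by (simp add: M_def)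
    then have "real n < \<delta> * real M" using d(1) by (simp add: divide_less_eq mult.commute)
    then show ?thesis using Mpos by (simp add: divide_less_eq mult.commute)
  qed
  have Me: "1 / real M < e"
  proof -
    have "1 / e < real M" using M0 by (simp add: M_def)
    then show ?thesis using e Mpos by (simp add: divide_less_eq mult.commute)
  qed
  obtain k :: nat where k: "k \<ge> 1" and kz: "\<forall>i<n. \<exists>z::int. \<bar>real k * w0 i - of_int z\<bar> < 1 / real M"
    using dirichlet[OF M1, of n w0] by blast
  obtain zf where zf: "\<And>i. i < n \<Longrightarrow> \<bar>real k * w0 i - of_int (zf i)\<bar> < 1 / real M"
    using kz by metis
  define Z0 where "Z0 i = (if i < n then real_of_int (zf i) else 0)" for i
  define ev where "ev i = real k * w0 i - Z0 i" for i
  have evL: "ev \<in> L" unfolding ev_def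
    by (intro L_diff W_L W_scale w0 L_int) (simp add: Z0_def)
  have "nv n ev \<le> (\<Sum>i<n. 1 / real M)"
    unfolding nv_def by (intro sum_mono) (use zf in \<open>auto simp: ev_def Z0_def less_imp_le\<close>)
  also have "\<dots> = real n / real M" by simp
  finally have "nv n ev < \<delta>" using Mn by linarith
  then have evW: "ev \<in> W" using d evL by blast
  define Z where "Z i = real k * w0 i - ev i" for i
  have ZW: "Z \<in> W" unfolding Z_def by (intro W_diff W_scale w0 evW)
  have ZZ: "Z i = Z0 i" for i by (simp add: Z_def ev_def)
  show ?thesis
  proof (intro exI[of _ Z] exI[of _ k] conjI allI impI)
    show "Z \<in> W" by (rule ZW)
    show "1 \<le> k" by (rule k)
    fix i assume i: "i < n"
    show "Z i \<in> \<int>" using i by (simp add: ZZ Z0_def)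
    have "\<bar>w0 i - Z i / real k\<bar> = \<bar>ev i\<bar> / real k"
      using k by (simp add: Z_def field_simps)
    also have "\<dots> \<le> \<bar>ev i\<bar>" using k by (simp add: divide_le_eq mult_le_cancel_left1)
    also have "\<dots> < 1 / real M" using zf[OF i] by (simp add: ev_def Z0_def i)
    finally show "\<bar>w0 i - Z i / real k\<bar> < e" using Me by linarith
  qed
qed

end

lemma digit_bound:
  fixes N K j l :: nat
  assumes N: "N \<ge> 1" and K: "K \<ge> 1"
  shows "\<bar>(if l \<le> j then real (N div K) * real N ^ l / real N ^ (j+1) else 0)
          - (if l = j then 1 / real K else 0)\<bar> \<le> 1 / real N"
proof -
  define d where "d = N div K"
  have e: "N = d * K + N mod K" unfolding d_def by simp
  have m: "N mod K < K" using K by simp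
  have dK1: "d * K \<le> N" using e m by linarith
  have dK2: "N < (d + 1) * K" using e m by (simp add: distrib_right)
  note dK = dK1 dK2
  have Np: "real N > 0" using N by simp
  have Kp: "real K > 0" using K by simp
  consider "l > j" | "l = j" | "l < j" by linarith
  then show ?thesis
  proof cases
    case 1 then show ?thesis using Np by simp
  next
    case 2
    have "real d * real N ^ l / real N ^ (j+1) = real d / real N"
      using 2 Np by (simp add: field_simps)
    moreover have "\<bar>real d / real N - 1 / real K\<bar> \<le> 1 / real N"
    proof -
      have a1: "real (d * K) \<le> real N" using dK1 by (simp only: of_nat_le_iff)
      have a2: "real N < real ((d + 1) * K)" using dK2 by (simp only: of_nat_less_iff)
      have a: "real d * real K \<le> real N" "real N < (real d + 1) * real K"
        using a1 a2 by (simp_all add: distrib_right)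
      have "real d / real N \<le> 1 / real K" using a Np Kp by (simp add: field_simps)
      moreover have "1 / real K - real d / real N \<le> 1 / real N"
      proof -
        have "1 / real K - real d / real N = (real N - real d * real K) / (real N * real K)"
          using Np Kp by (simp add: field_simps)
        also have "\<dots> \<le> real K / (real N * real K)"
          using a Np Kp by (intro divide_right_mono) (simp_all add: algebra_simps)
        also have "\<dots> = 1 / real N" using Kp by simp
        finally show ?thesis .
      qed
      ultimately show ?thesis by linarith
    qed
    ultimately show ?thesis using 2 by (simp add: d_def)
  next
    case 3
    have "d \<le> N" unfolding d_def by (rule div_le_dividend)
    then have dN: "real d \<le> real N" by simp
    have "real d * real N ^ l / real N ^ (j+1) \<le> real N * real N ^ l / real N ^ (j+1)"
      using dN Np by (intro divide_right_mono mult_right_mono) auto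
    also have "\<dots> = real N ^ (l + 1) / real N ^ (j+1)" by simp
    also have "\<dots> \<le> real N ^ j / real N ^ (j+1)"
      using 3 N by (intro divide_right_mono power_increasing) auto
    also have "\<dots> = 1 / real N" using Np by simp
    finally have "real d * real N ^ l / real N ^ (j+1) \<le> 1 / real N" .
    moreover have "0 \<le> real d * real N ^ l / real N ^ (j+1)" by simp
    ultimately show ?thesis using 3 by (simp add: d_def)
  qed
qed

lemma t_int:
  fixes N d j l :: nat
  assumes N: "N \<ge> 1" and "j < l"
  shows "real d / real N ^ (j+1) * real N ^ l = real (d * N ^ (l - j - 1))"
proof -
  have "l = (j + 1) + (l - j - 1)" using assms by simp
  then have "real N ^ l = real N ^ (j+1) * real N ^ (l - j - 1)" by (metis power_add)
  then show ?thesis using N by simp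
qed

lemma circ_point:
  fixes Z :: "nat \<Rightarrow> nat \<Rightarrow> real" and K N j r n i :: nat
  assumes Zint: "\<And>l. l < r \<Longrightarrow> Z l i \<in> \<int>" and j: "j < r" and N: "N \<ge> 1" and K: "K \<ge> 1"
    and i: "i < n"
  shows "dT (circ n (\<lambda>i. \<Sum>l<r. real N ^ l * Z l i) (real (N div K) / real N ^ (j+1)) i)
            (qn n (\<lambda>i. Z j i / real K) i) \<le> (\<Sum>l<r. \<bar>Z l i\<bar>) / real N"
proof -
  define t where "t = real (N div K) / real N ^ (j+1)"
  define c where "c l = (if j < l then real (N div K * N ^ (l - j - 1)) else 0)" for l
  define f where "f l = (if l \<le> j then real (N div K) * real N ^ l / real N ^ (j+1) else 0)" for l
  define g where "g l = f l - (if l = j then 1 / real K else 0)" for l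
  have tcf: "t * real N ^ l = c l + f l" for l
    using t_int[OF N, of j l "N div K"] by (auto simp: t_def c_def f_def)
  have tw: "t * (\<Sum>l<r. real N ^ l * Z l i) = (\<Sum>l<r. c l * Z l i) + (\<Sum>l<r. f l * Z l i)"
    by (simp add: sum_distrib_left sum.distrib[symmetric] mult.assoc[symmetric] tcf distrib_right)
  have Iint: "(\<Sum>l<r. c l * Z l i) \<in> \<int>"
    using Zint by (intro Ints_sum Ints_mult) (auto simp: c_def)
  have fg: "(\<Sum>l<r. f l * Z l i) - Z j i / real K = (\<Sum>l<r. g l * Z l i)"
  proof -
    have "(\<Sum>l<r. g l * Z l i) = (\<Sum>l<r. f l * Z l i) - (\<Sum>l<r. (if l = j then 1 / real K else 0) * Z l i)"
      by (simp add: g_def left_diff_distrib sum_subtractf)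
    moreover have "(\<Sum>l<r. (if l = j then 1 / real K else 0) * Z l i) = Z j i / real K"
      using j by (simp add: if_distrib[of "\<lambda>x. x * _"] cong: if_cong)
    ultimately show ?thesis by simp
  qed
  have gb: "\<bar>g l\<bar> \<le> 1 / real N" for l
    unfolding g_def f_def by (rule digit_bound[OF N K])
  have "dT (circ n (\<lambda>i. \<Sum>l<r. real N ^ l * Z l i) t i) (qn n (\<lambda>i. Z j i / real K) i)
        \<le> \<bar>t * (\<Sum>l<r. real N ^ l * Z l i) - Z j i / real K - (\<Sum>l<r. c l * Z l i)\<bar>"
    unfolding circ_def by (rule dT_qn_int[OF i Iint])
  also have "\<dots> = \<bar>\<Sum>l<r. g l * Z l i\<bar>" using tw fg by simp
  also have "\<dots> \<le> (\<Sum>l<r. \<bar>g l\<bar> * \<bar>Z l i\<bar>)"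
    by (rule order_trans[OF sum_abs]) (simp add: abs_mult)
  also have "\<dots> \<le> (\<Sum>l<r. (1 / real N) * \<bar>Z l i\<bar>)"
    by (intro sum_mono mult_right_mono gb) auto
  also have "\<dots> = (\<Sum>l<r. \<bar>Z l i\<bar>) / real N" by (simp add: sum_divide_distrib)
  finally show ?thesis by (simp add: t_def)
qed


context Gctx
begin

lemma P_sub_TN: "P \<subseteq> TN" using P_TN by blast

lemma approx:
  assumes e: "e > 0"
  shows "\<exists>w. (\<forall>i<n. w i \<in> \<int>) \<and> w \<in> W \<and> (\<forall>p\<in>P. \<exists>t. \<forall>i<n. dT (p i) (circ n w t i) \<le> e)"
proof -
  obtain M0 :: nat where M0: "3 / e < real M0" using reals_Archimedean2 by blast
  define M where "M = M0 + 1"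
  have M1: "M \<ge> 1" by (simp add: M_def)
  have Me: "1 / real M < e / 3"
  proof -
    have "3 / e < real M" using M0 by (simp add: M_def)
    then have "3 < e * real M" using e by (simp add: divide_less_eq mult.commute)
    then show ?thesis using M1 by (simp add: field_simps)
  qed
  obtain Nt where Nt: "finite Nt" "Nt \<subseteq> P" "\<forall>p\<in>P. \<exists>p'\<in>Nt. \<forall>i<n. \<bar>p i - p' i\<bar> < 1 / real M"
    using net_exists[OF M1 P_sub_TN, of n] by blast
  obtain xs where xs: "set xs = Nt" using finite_list[OF Nt(1)] by blast
  have "\<forall>p\<in>Nt. \<exists>ZK. (\<forall>i<n. fst ZK i \<in> \<int>) \<and> fst ZK \<in> W \<and> snd ZK \<ge> (1::nat) \<and>
          (\<forall>i<n. dT (p i) (qn n (\<lambda>i. fst ZK i / real (snd ZK)) i) < e / 3)"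
  proof
    fix p assume "p \<in> Nt"
    then have "p \<in> P" using Nt(2) by blast
    then obtain w0 where w0: "w0 \<in> W" "p = qn n w0" using P_W by blast
    obtain Z and K :: nat where ZK: "\<forall>i<n. Z i \<in> \<int>" "Z \<in> W" "K \<ge> 1" "\<forall>i<n. \<bar>w0 i - Z i / real K\<bar> < e / 3"
      using approx_point[OF w0(1), of "e/3"] e by auto
    show "\<exists>ZK. (\<forall>i<n. fst ZK i \<in> \<int>) \<and> fst ZK \<in> W \<and> snd ZK \<ge> (1::nat) \<and>
          (\<forall>i<n. dT (p i) (qn n (\<lambda>i. fst ZK i / real (snd ZK)) i) < e / 3)"
    proof (intro exI[of _ "(Z, K)"] conjI allI impI)
      fix i assume i: "i < n"
      have "dT (p i) (qn n (\<lambda>i. Z i / real K) i) \<le> \<bar>w0 i - Z i / real K\<bar>"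
        unfolding w0(2) by (rule dT_qn[OF i])
      then show "dT (p i) (qn n (\<lambda>i. fst (Z, K) i / real (snd (Z, K))) i) < e / 3"
        using ZK(4) i by fastforce
    qed (use ZK in auto)
  qed
  then obtain f where f: "\<And>p. p \<in> Nt \<Longrightarrow> (\<forall>i<n. fst (f p) i \<in> \<int>) \<and> fst (f p) \<in> W \<and> snd (f p) \<ge> (1::nat) \<and>
          (\<forall>i<n. dT (p i) (qn n (\<lambda>i. fst (f p) i / real (snd (f p))) i) < e / 3)"
    by metis
  define r where "r = length xs"
  define Zl where "Zl l = fst (f (xs ! l))" for l
  define Kl where "Kl l = snd (f (xs ! l))" for l
  have xsN: "xs ! l \<in> Nt" if "l < r" for l using that xs by (auto simp: r_def)
  have Zint: "Zl l i \<in> \<int>" if "l < r" "i < n" for l i using f[OF xsN[OF that(1)]] that by (simp add: Zl_def)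
  have ZW: "Zl l \<in> W" if "l < r" for l using f[OF xsN[OF that]] by (simp add: Zl_def)
  have K1: "Kl l \<ge> 1" if "l < r" for l using f[OF xsN[OF that]] by (simp add: Kl_def)
  have Zclose: "dT ((xs ! l) i) (qn n (\<lambda>i. Zl l i / real (Kl l)) i) < e / 3" if "l < r" "i < n" for l i
    using f[OF xsN[OF that(1)]] that by (simp add: Zl_def Kl_def)
  define B where "B = (\<Sum>l<r. \<Sum>i<n. \<bar>Zl l i\<bar>)"
  obtain N0 :: nat where N0: "3 * B / e < real N0" using reals_Archimedean2 by blast
  define N where "N = N0 + 1"
  have N1: "N \<ge> 1" by (simp add: N_def)
  have BN: "B / real N < e / 3"
  proof -
    have "3 * B / e < real N" using N0 by (simp add: N_def)
    then have "3 * B < e * real N" using e by (simp add: divide_less_eq mult.commute)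
    then show ?thesis using N1 by (simp add: field_simps)
  qed
  define w where "w i = (\<Sum>l<r. real N ^ l * Zl l i)" for i
  show ?thesis
  proof (intro exI[of _ w] conjI allI impI ballI)
    fix i assume i: "i < n"
    show "w i \<in> \<int>" unfolding w_def using Zint i by (intro Ints_sum Ints_mult) auto
  next
    show "w \<in> W" unfolding w_def using ZW by (intro W_sum) auto
  next
    fix p assume pP: "p \<in> P"
    obtain p' where p': "p' \<in> Nt" "\<forall>i<n. \<bar>p i - p' i\<bar> < 1 / real M" using Nt(3) pP by blast
    obtain j where j: "j < r" "xs ! j = p'" using p'(1) xs by (auto simp: r_def in_set_conv_nth)
    define t where "t = real (N div Kl j) / real N ^ (j+1)"
    show "\<exists>t. \<forall>i<n. dT (p i) (circ n w t i) \<le> e"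
    proof (intro exI[of _ t] allI impI)
      fix i assume i: "i < n"
      have d1: "dT (p i) (p' i) < e / 3" using p'(2) i dT_le_abs[of "p i" "p' i"] Me by fastforce
      have d2: "dT (p' i) (qn n (\<lambda>i. Zl j i / real (Kl j)) i) < e / 3"
        using Zclose[OF j(1) i] j(2) by simp
      have "dT (circ n w t i) (qn n (\<lambda>i. Zl j i / real (Kl j)) i) \<le> (\<Sum>l<r. \<bar>Zl l i\<bar>) / real N"
        unfolding t_def w_def
        by (rule circ_point[OF _ j(1) N1 K1[OF j(1)] i]) (rule Zint[OF _ i])
      also have "\<dots> \<le> B / real N"
        unfolding B_def using N1
        by (intro divide_right_mono sum_mono member_le_sum) (use i in auto)
      finally have "dT (circ n w t i) (qn n (\<lambda>i. Zl j i / real (Kl j)) i) < e / 3"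
        using BN by linarith
      then have d3: "dT (qn n (\<lambda>i. Zl j i / real (Kl j)) i) (circ n w t i) < e / 3"
        by (simp add: dT_commute)
      have "dT (p i) (circ n w t i) \<le> dT (p i) (p' i) + dT (p' i) (circ n w t i)" by (rule dT_triangle)
      also have "dT (p' i) (circ n w t i) \<le> dT (p' i) (qn n (\<lambda>i. Zl j i / real (Kl j)) i)
          + dT (qn n (\<lambda>i. Zl j i / real (Kl j)) i) (circ n w t i)" by (rule dT_triangle)
      finally show "dT (p i) (circ n w t i) \<le> e" using d1 d2 d3 by linarith
    qed
  qed
qed

end


lemma pow_facts:
  assumes "n \<ge> (1::nat)"
  shows "1 / 2 ^ n \<le> (1::real) / 2 ^ (n - 1)"
    and "2 * (1 / 2 ^ (n + 2)) + 1 / 2 ^ n \<le> (1::real) / 2 ^ (n - 1)"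
    and "(1/2) / 2 ^ (n - 1) + 1 / 2 ^ n = (1::real) / 2 ^ (n - 1)"
    and "(1::real) / 2 ^ (n + 2) < 1 / 2"
proof -
  obtain m where m: "n = Suc m" using assms by (cases n) auto
  show "1 / 2 ^ n \<le> (1::real) / 2 ^ (n - 1)" by (simp add: m field_simps)
  show "2 * (1 / 2 ^ (n + 2)) + 1 / 2 ^ n \<le> (1::real) / 2 ^ (n - 1)" by (simp add: m field_simps)
  show "(1/2) / 2 ^ (n - 1) + 1 / 2 ^ n = (1::real) / 2 ^ (n - 1)" by (simp add: m field_simps)
  have "(2::real) ^ 2 \<le> 2 ^ (n + 2)" by (rule power_increasing) auto
  moreover have "(2::real) < 2 ^ 2" by simp
  ultimately have h: "(2::real) < 2 ^ (n + 2)" by linarith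
  then show "(1::real) / 2 ^ (n + 2) < 1 / 2" by (simp add: field_simps)
qed

lemma dT_half_zero: "dT (1/2) 0 = 1/2"
proof -
  have "round (1/2 :: real) = 1" by (simp add: round_def)
  then show ?thesis by (simp add: dT_def)
qed

context Gctx
begin

lemma G_TN_elem: "a \<in> G \<Longrightarrow> i < n \<Longrightarrow> qn n a i = a i"
  using G_TN by (auto simp: qn_def TN_def T_set_def)

lemma key: "\<exists>w. (\<forall>i<n. w i \<in> \<int>) \<and> (\<exists>i0<n. w i0 \<noteq> 0) \<and> dH G (range (circ n w)) \<le> 1 / 2 ^ (n - 1)"
proof (cases "P = {TN_zero}")
  case True
  define w where "w i = (if i = n - 1 then 1 else 0 :: real)" for i
  have Gne: "G \<noteq> {}" using G_grp(1) by blast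
  have c0: "circ n w 0 = TN_zero" by (rule circ_zero)
  show ?thesis
  proof (intro exI[of _ w] conjI)
    show "\<forall>i<n. w i \<in> \<int>" by (simp add: w_def)
    show "\<exists>i0<n. w i0 \<noteq> 0" using n1 by (intro exI[of _ "n - 1"]) (simp add: w_def)
    show "dH G (range (circ n w)) \<le> 1 / 2 ^ (n - 1)"
    proof (rule dH_le[OF Gne])
      show "range (circ n w) \<noteq> {}" by simp
      fix a assume a: "a \<in> G"
      have "qn n a \<in> P" by (rule qn_in_P[OF a])
      then have qa: "qn n a = TN_zero" using True by simp
      have "dTN a (circ n w 0) \<le> 2 * 0 + 1 / 2 ^ n"
      proof (rule tail_bound_eps)
        fix i assume i: "i < n"
        have "a i = 0" using G_TN_elem[OF a i] fun_cong[OF qa, of i] by (simp add: TN_zero_def)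
        then show "dT (a i) (circ n w 0 i) \<le> 0" by (simp add: c0 TN_zero_def dT_same)
      qed simp
      then show "\<exists>b\<in>range (circ n w). dTN a b \<le> 1 / 2 ^ (n - 1)"
        using pow_facts(1)[OF n1] by (intro bexI[of _ "circ n w 0"]) auto
    next
      fix b assume "b \<in> range (circ n w)"
      then obtain t where t: "b = circ n w t" by blast
      have s: "(\<Sum>i<n. dT (TN_zero i) (b i) / 2 ^ i)
            = (\<Sum>i<n. if i = n - 1 then dT 0 (b (n - 1)) / 2 ^ (n - 1) else 0)"
        by (rule sum.cong) (auto simp: t circ_def qn_def w_def TN_zero_def dT_same)
      also have "\<dots> = dT 0 (b (n - 1)) / 2 ^ (n - 1)" using n1 by simp
      also have "\<dots> \<le> (1/2) / 2 ^ (n - 1)" by (intro divide_right_mono dT_half) simp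
      finally have "dTN TN_zero b \<le> (1/2) / 2 ^ (n - 1) + 1 / 2 ^ n"
        using tail_bound[of TN_zero b n] by linarith
      then show "\<exists>a\<in>G. dTN a b \<le> 1 / 2 ^ (n - 1)"
        using pow_facts(3)[OF n1] G_grp(1) by (intro bexI[of _ TN_zero]) auto
    qed
  qed
next
  case False
  then obtain p where pP: "p \<in> P" and pne: "p \<noteq> TN_zero" using P_zero by blast
  define e :: real where "e = 1 / 2 ^ (n + 2)"
  have e0: "e > 0" by (simp add: e_def)
  obtain w where wint: "\<forall>i<n. w i \<in> \<int>" and wW: "w \<in> W"
    and wap: "\<forall>p\<in>P. \<exists>t. \<forall>i<n. dT (p i) (circ n w t i) \<le> e"
    using approx[OF e0] by blast
  have nz: "\<exists>i0<n. w i0 \<noteq> 0"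
  proof (rule ccontr)
    assume "\<not> ?thesis"
    then have w0: "\<forall>i<n. w i = 0" by simp
    obtain i where i: "i < n" "p i \<noteq> 0"
    proof -
      have "\<exists>i. p i \<noteq> 0" using pne by (auto simp: TN_zero_def)
      then obtain i where "p i \<noteq> 0" by blast
      moreover have "i < n"
      proof (rule ccontr)
        assume "\<not> i < n"
        then have "qn n p i = 0" by (simp add: qn_def)
        then show False using P_qn_id[OF pP] \<open>p i \<noteq> 0\<close> by simp
      qed
      ultimately show ?thesis using that by blast
    qed
    obtain v where v: "v \<in> W" "p = qn n v" using P_W[OF pP] by blast
    have vi: "v i \<noteq> 0" using i v(2) by (auto simp: qn_def)
    define q where "q = circ n v (1 / (2 * v i))"
    have qP: "q \<in> P" using v(1) by (simp add: W_def q_def)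
    have qi: "q i = 1/2" using i vi by (simp add: q_def circ_def qn_def)
    obtain t where "\<forall>i<n. dT (q i) (circ n w t i) \<le> e" using wap qP by blast
    then have "dT (q i) (circ n w t i) \<le> e" using i by blast
    moreover have "circ n w t i = 0" using w0 i by (simp add: circ_def qn_def)
    ultimately have "1/2 \<le> e" using qi dT_half_zero by simp
    then show False using pow_facts(4)[OF n1] by (simp add: e_def)
  qed
  have Gne: "G \<noteq> {}" using G_grp(1) by blast
  show ?thesis
  proof (intro exI[of _ w] conjI)
    show "\<forall>i<n. w i \<in> \<int>" by (rule wint)
    show "\<exists>i0<n. w i0 \<noteq> 0" by (rule nz)
    show "dH G (range (circ n w)) \<le> 1 / 2 ^ (n - 1)"
    proof (rule dH_le[OF Gne])
      show "range (circ n w) \<noteq> {}" by simp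
      fix a assume a: "a \<in> G"
      obtain t where t: "\<forall>i<n. dT (qn n a i) (circ n w t i) \<le> e"
        using wap qn_in_P[OF a] by blast
      have "dTN a (circ n w t) \<le> 2 * e + 1 / 2 ^ n"
      proof (rule tail_bound_eps)
        fix i assume i: "i < n"
        show "dT (a i) (circ n w t i) \<le> e" using t i G_TN_elem[OF a i] by metis
      qed (use e0 in simp)
      then show "\<exists>b\<in>range (circ n w). dTN a b \<le> 1 / 2 ^ (n - 1)"
        using pow_facts(2)[OF n1] by (intro bexI[of _ "circ n w t"]) (auto simp: e_def)
    next
      fix b assume "b \<in> range (circ n w)"
      then obtain t where t: "b = circ n w t" by blast
      have "b \<in> P" using wW t by (simp add: W_def)
      then obtain a where a: "a \<in> G" "b = qn n a" using P_elem by blast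
      have "dTN a b \<le> 2 * 0 + 1 / 2 ^ n"
      proof (rule tail_bound_eps)
        fix i assume i: "i < n"
        show "dT (a i) (b i) \<le> 0" using G_TN_elem[OF a(1) i] a(2) by (simp add: dT_same)
      qed simp
      then show "\<exists>a\<in>G. dTN a b \<le> 1 / 2 ^ (n - 1)"
        using pow_facts(1)[OF n1] a(1) by (intro bexI[of _ a]) auto
    qed
  qed
qed

end

theorem lemma3p6:
  fixes n :: nat
  assumes "n \<ge> 1"
  shows "\<forall>G\<in>CTN. \<exists>F\<in>CTN. circle_group (proj_init n ` F) \<and> proj_tail n ` F = {TN_zero}
            \<and> dH G F \<le> 1 / 2 ^ (n - 1)"
proof
  fix G assume G: "G \<in> CTN"
  interpret Gctx n G using assms G by unfold_locales
  obtain w where w: "\<forall>i<n. w i \<in> \<int>" "\<exists>i0<n. w i0 \<noteq> 0" "dH G (range (circ n w)) \<le> 1 / 2 ^ (n - 1)"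
    using key by blast
  obtain i0 where i0: "i0 < n" "w i0 \<noteq> 0" using w(2) by blast
  show "\<exists>F\<in>CTN. circle_group (proj_init n ` F) \<and> proj_tail n ` F = {TN_zero}
            \<and> dH G F \<le> 1 / 2 ^ (n - 1)"
  proof (intro bexI[of _ "range (circ n w)"] conjI)
    show "range (circ n w) \<in> CTN" using w(1) by (intro circ_CTN) auto
    show "circle_group (proj_init n ` range (circ n w))"
      unfolding circ_proj_init using w(1) i0 by (intro circle_group_int) auto
    show "proj_tail n ` range (circ n w) = {TN_zero}" by (rule circ_proj_tail)
    show "dH G (range (circ n w)) \<le> 1 / 2 ^ (n - 1)" by (rule w(3))
  qed
qed


end
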